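(* Let $c\in(0,1)$ be a constant and $T^{-}_{c}(\alpha):=\frac{1-c}{\lambda}\log\alpha$. As $\alpha\to+\infty$, the normalized effective weight $\frac{\boldsymbol{w}(\boldsymbol{\theta}(T^{-}_{c}(\alpha);\alpha\bar{\boldsymbol{\theta}}_{\mathrm{init}}))}{\|\boldsymbol{w}(\boldsymbol{\theta}(T^{-}_{c}(\alpha);\alpha\bar{\boldsymbol{\theta}}_{\mathrm{init}}))\|_2}$ converges to the max $L^2$-margin direction $\boldsymbol{w}^*_2:=\arg\max_{\boldsymbol{w}\in\mathcal{S}^{d-1}}\min_{i\in[n]}y_i\langle\boldsymbol{w},\boldsymbol{x}_i\rangle$.
   Context: Training data $\{(\boldsymbol{x}_i,y_i)\}_{i=1}^n$ with $\boldsymbol{x}_i\in\mathbb{R}^d$, $y_i\in\{\pm1\}$, assumed linearly separable (there is $\boldsymbol{w}$ with $y_i\langle\boldsymbol{w},\boldsymbol{x}_i\rangle>0$ for all $i$). Diagonal linear net: parameters $\boldsymbol{\theta}=(\boldsymbol{u},\boldsymbol{v})\in\mathbb{R}^d\times\mathbb{R}^d$, output $f(\boldsymbol{\theta};\boldsymbol{x})=\sum_{k=1}^du_k^2x_k-\sum_{k=1}^dv_k^2x_k=\langle\boldsymbol{w}(\boldsymbol{\theta}),\boldsymbol{x}\rangle$ with effective weight $\boldsymbol{w}(\boldsymbol{\theta}):=\boldsymbol{u}^{\odot2}-\boldsymbol{v}^{\odot2}$. Loss $\mathcal{L}(\boldsymbol{\theta})=\frac1n\sum_ie^{-y_if(\boldsymbol{\theta};\boldsymbol{x}_i)}$,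 $\mathcal{L}_\lambda(\boldsymbol{\theta})=\mathcal{L}(\boldsymbol{\theta})+\frac\lambda2\|\boldsymbol{\theta}\|_2^2$, where $\lambda=\lambda(\alpha)>0$ satisfies $\lambda(\alpha)=\Theta(\alpha^{-p})$ for a constant $p>0$. $\bar{\boldsymbol{\theta}}_{\mathrm{init}}=(\boldsymbol{1},\boldsymbol{1})$, and $\boldsymbol{\theta}(t;\boldsymbol{\theta}_0)$ is the gradient flow $\frac{d\boldsymbol{\theta}}{dt}=-\nabla\mathcal{L}_\lambda(\boldsymbol{\theta})$ from $\boldsymbol{\theta}_0$. $\mathcal{S}^{d-1}$ is the unit sphere. *)

theory Defs
  imports "HOL-Analysis.Analysis" "HOL-Library.Landau_Symbols"
begin

definition eff_weight :: "(real^'d) \<times> (real^'d) \<Rightarrow> real^'d" where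
  "eff_weight \<theta> = (\<chi> k. (fst \<theta> $ k)^2 - (snd \<theta> $ k)^2)"

definition exp_loss :: "nat \<Rightarrow> (nat \<Rightarrow> real^'d) \<Rightarrow> (nat \<Rightarrow> real)
    \<Rightarrow> (real^'d) \<times> (real^'d) \<Rightarrow> real" where
  "exp_loss n x y \<theta> = (1 / real n) * (\<Sum>i<n. exp (- y i * (eff_weight \<theta> \<bullet> x i)))"

definition reg_loss :: "real \<Rightarrow> nat \<Rightarrow> (nat \<Rightarrow> real^'d) \<Rightarrow> (nat \<Rightarrow> real)
    \<Rightarrow> (real^'d) \<times> (real^'d) \<Rightarrow> real" where
  "reg_loss lam n x y \<theta> = exp_loss n x y \<theta> + lam / 2 * (norm \<theta>)^2"

definition is_gradient_flow ::
  "(('a::real_inner) \<Rightarrow> real) \<Rightarrow> 'a \<Rightarrow> (real \<Rightarrow> 'a) \<Rightarrow> bool" where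
  "is_gradient_flow F \<theta>0 \<theta> \<longleftrightarrow> \<theta> 0 = \<theta>0 \<and>
     (\<forall>t\<ge>0. \<exists>g. (F has_derivative (\<lambda>h. g \<bullet> h)) (at (\<theta> t)) \<and>
                 (\<theta> has_vector_derivative (- g)) (at t within {0..}))"

definition margin :: "nat \<Rightarrow> (nat \<Rightarrow> real^'d) \<Rightarrow> (nat \<Rightarrow> real) \<Rightarrow> real^'d \<Rightarrow> real" where
  "margin n x y w = Min ((\<lambda>i. y i * (w \<bullet> x i)) ` {..<n})"

definition is_max_L2_margin_dir ::
  "nat \<Rightarrow> (nat \<Rightarrow> real^'d) \<Rightarrow> (nat \<Rightarrow> real) \<Rightarrow> real^'d \<Rightarrow> bool" where
  "is_max_L2_margin_dir n x y w \<longleftrightarrow> norm w = 1 \<and>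
     (\<forall>w'. norm w' = 1 \<longrightarrow> margin n x y w' \<le> margin n x y w)"

end

theory Submission
  imports Defs "HOL-Real_Asymp.Real_Asymp"
begin

lemma incr_from_deriv:
  fixes f f' :: "real \<Rightarrow> real"
  assumes "a \<le> b" "\<And>x. (f has_real_derivative f' x) (at x)"
    "\<And>x. a < x \<Longrightarrow> x < b \<Longrightarrow> f' x \<ge> 0"
  shows "f a \<le> f b"
proof (rule DERIV_nonneg_imp_increasing_open[OF assms(1)])
  show "\<And>x. a < x \<Longrightarrow> x < b \<Longrightarrow> \<exists>y. (f has_real_derivative y) (at x) \<and> 0 \<le> y"
    using assms by blast
  show "continuous_on {a..b} f"
    using assms(2) by (meson DERIV_isCont continuous_at_imp_continuous_on)
qed

lemma sinh_ge_self: "0 \<le> (x::real) \<Longrightarrow> x \<le> sinh x"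
proof -
  assume x: "0 \<le> x"
  have d: "\<And>x. ((\<lambda>x. sinh x - x) has_real_derivative cosh x - 1) (at (x::real))"
    by (auto intro!: derivative_eq_intros)
  show ?thesis using incr_from_deriv[OF x d] by (auto simp: cosh_real_ge_1)
qed

lemma cosh_ge_sq_nonneg: "0 \<le> (x::real) \<Longrightarrow> x^2/2 \<le> cosh x - 1"
proof -
  assume x: "0 \<le> x"
  have d: "\<And>x. ((\<lambda>x. cosh x - 1 - x^2/2) has_real_derivative sinh x - x) (at (x::real))"
    by (auto intro!: derivative_eq_intros)
  show ?thesis using incr_from_deriv[OF x d] by (auto simp: sinh_ge_self)
qed

lemma cosh_ge_sq: "(x::real)^2/2 \<le> cosh x - 1"
proof (cases "x \<ge> 0")
  case True then show ?thesis by (rule cosh_ge_sq_nonneg)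
next
  case False
  then have "(-x)^2/2 \<le> cosh (-x) - 1" by (intro cosh_ge_sq_nonneg) auto
  then show ?thesis by simp
qed

lemma cosh_le_2: "\<bar>x::real\<bar> \<le> 1 \<Longrightarrow> cosh x \<le> 2"
proof -
  assume a: "\<bar>x\<bar> \<le> 1"
  have "cosh x = cosh \<bar>x\<bar>" by (cases "x \<ge> 0") auto
  also have "\<dots> \<le> cosh 1" using a by (subst cosh_real_nonneg_le_iff) auto
  also have "cosh 1 = (exp 1 + exp (-1)) / (2::real)" by (simp add: cosh_def)
  also have "\<dots> \<le> 2"
  proof -
    have "exp (-1::real) \<le> 1" by simp
    then have "exp 1 + exp (-1::real) \<le> 4" using exp_le by linarith
    then show ?thesis by simp
  qed
  finally show ?thesis .
qed

lemma sinh_le_2x: "0 \<le> (x::real) \<Longrightarrow> x \<le> 1 \<Longrightarrow> sinh x \<le> 2 * x"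
proof -
  assume x: "0 \<le> x" "x \<le> 1"
  have d: "\<And>x. ((\<lambda>x. 2*x - sinh x) has_real_derivative 2 - cosh x) (at (x::real))"
    by (auto intro!: derivative_eq_intros)
  show ?thesis using incr_from_deriv[OF x(1) d] x by (auto simp: cosh_le_2)
qed

lemma cosh_le_sq_nonneg: "0 \<le> (x::real) \<Longrightarrow> x \<le> 1 \<Longrightarrow> cosh x - 1 \<le> x^2"
proof -
  assume x: "0 \<le> x" "x \<le> 1"
  have d: "\<And>x. ((\<lambda>x. x^2 - cosh x) has_real_derivative 2*x - sinh x) (at (x::real))"
    by (auto intro!: derivative_eq_intros)
  show ?thesis using incr_from_deriv[OF x(1) d] x by (auto simp: sinh_le_2x)
qed

lemma cosh_le_sq: "\<bar>x::real\<bar> \<le> 1 \<Longrightarrow> cosh x - 1 \<le> x^2"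
proof (cases "x \<ge> 0")
  case True then show "\<bar>x\<bar> \<le> 1 \<Longrightarrow> ?thesis" by (intro cosh_le_sq_nonneg) auto
next
  case False
  assume "\<bar>x\<bar> \<le> 1"
  then have "cosh (-x) - 1 \<le> (-x)^2" using False by (intro cosh_le_sq_nonneg) auto
  then show ?thesis by simp
qed

lemma sinh_minus_self_nonneg: "0 \<le> (x::real) \<Longrightarrow> x \<le> 1 \<Longrightarrow> sinh x - x \<le> x^3"
proof -
  assume x: "0 \<le> x" "x \<le> 1"
  have d: "\<And>x. ((\<lambda>x. x^3 - sinh x + x) has_real_derivative 3*x^2 - cosh x + 1) (at (x::real))"
    by (auto intro!: derivative_eq_intros)
  have "\<And>y. 0 < y \<Longrightarrow> y < x \<Longrightarrow> 0 \<le> 3*y^2 - cosh y + 1"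
  proof -
    fix y :: real assume "0 < y" "y < x"
    then have "cosh y - 1 \<le> y^2" using x by (intro cosh_le_sq) auto
    moreover have "0 \<le> y^2" by simp
    ultimately show "0 \<le> 3*y^2 - cosh y + 1" by linarith
  qed
  then show ?thesis using incr_from_deriv[OF x(1) d] x by auto
qed
  
lemma sinh_minus_self: "\<bar>x::real\<bar> \<le> 1 \<Longrightarrow> \<bar>sinh x - x\<bar> \<le> \<bar>x\<bar>^3"
proof (cases "x \<ge> 0")
  case True
  assume "\<bar>x\<bar> \<le> 1"
  then show ?thesis using True sinh_minus_self_nonneg[of x] sinh_ge_self[of x] by (simp add: abs_le_iff)
next
  case False
  assume "\<bar>x\<bar> \<le> 1"
  then show ?thesis using False sinh_minus_self_nonneg[of "-x"] sinh_ge_self[of "-x"] by (simp add: abs_le_iff)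
qed

lemma xexp_le: "(x::real) * exp (-x) \<le> exp (-1)"
proof -
  have "x \<le> exp (x - 1)" using exp_ge_add_one_self[of "x-1"] by simp
  then have "x * exp (-x) \<le> exp (x - 1) * exp (-x)" by (simp add: mult_right_mono)
  also have "\<dots> = exp (-1)" by (simp flip: exp_add)
  finally show ?thesis .
qed

lemma sinh_sq_cosh: "(sinh (x::real))^2 = (cosh x - 1)^2 + 2 * (cosh x - 1)"
  using cosh_square_eq[of x] by (simp add: power2_eq_square algebra_simps)

definition sh :: "real^'d \<Rightarrow> real^'d" where "sh s = (\<chi> k. sinh (s$k))"
definition Pc :: "real^'d \<Rightarrow> real" where "Pc s = (\<Sum>k\<in>UNIV. cosh (s$k) - 1)"

lemma norm_sq_sum: "(norm (s::real^'d))^2 = (\<Sum>k\<in>UNIV. (s$k)^2)"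
  unfolding power2_norm_eq_inner inner_vec_def by (simp add: power2_eq_square)

lemma Pc_nonneg: "0 \<le> Pc s"
  unfolding Pc_def by (intro sum_nonneg) (simp add: cosh_real_ge_1)

lemma norm_le_Pc: "(norm s)^2 \<le> 2 * Pc s"
proof -
  have "(norm s)^2 = (\<Sum>k\<in>UNIV. (s$k)^2)" by (rule norm_sq_sum)
  also have "\<dots> \<le> (\<Sum>k\<in>UNIV. 2 * (cosh (s$k) - 1))"
  proof (intro sum_mono)
    fix k show "(s$k)^2 \<le> 2 * (cosh (s$k) - 1)" using cosh_ge_sq[of "s$k"] by simp
  qed
  also have "\<dots> = 2 * Pc s" by (simp add: Pc_def sum_distrib_left)
  finally show ?thesis .
qed

lemma sum_sq_le_sq_sum:
  fixes a :: "'a \<Rightarrow> real"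
  assumes "finite A" "\<And>k. k \<in> A \<Longrightarrow> 0 \<le> a k"
  shows "(\<Sum>k\<in>A. (a k)^2) \<le> (\<Sum>k\<in>A. a k)^2"
proof -
  have "(\<Sum>k\<in>A. (a k)^2) \<le> (\<Sum>k\<in>A. a k * (\<Sum>j\<in>A. a j))"
  proof (intro sum_mono)
    fix k assume k: "k \<in> A"
    have "a k \<le> (\<Sum>j\<in>A. a j)" using assms k by (intro member_le_sum) auto
    then show "(a k)^2 \<le> a k * (\<Sum>j\<in>A. a j)"
      using assms(2)[OF k] by (simp add: power2_eq_square mult_left_mono)
  qed
  also have "\<dots> = (\<Sum>k\<in>A. a k)^2" by (simp add: power2_eq_square sum_distrib_right)
  finally show ?thesis .
qed

lemma norm_sh_le_Pc: "(norm (sh s))^2 \<le> 2 * Pc s + (Pc s)^2"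
proof -
  have "(norm (sh s))^2 = (\<Sum>k\<in>UNIV. (sinh (s$k))^2)" by (simp add: norm_sq_sum sh_def)
  also have "\<dots> = (\<Sum>k\<in>UNIV. (cosh (s$k) - 1)^2) + 2 * Pc s"
    by (simp add: sinh_sq_cosh sum.distrib Pc_def sum_distrib_left)
  also have "(\<Sum>k\<in>UNIV. (cosh (s$k) - 1)^2) \<le> (Pc s)^2"
    unfolding Pc_def by (rule sum_sq_le_sq_sum) (auto simp: cosh_real_ge_1)
  finally show ?thesis by simp
qed

lemma norm_sh_le_V:
  "norm (sh s) \<le> sqrt (2 * Pc s) * (1 + (2 * Pc s) / 8)"
proof -
  let ?V = "sqrt (2 * Pc s)"
  have V2: "?V^2 = 2 * Pc s" using Pc_nonneg[of s] by simp
  have V4: "?V^4/4 = (Pc s)^2"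
  proof -
    have "?V^4 = (?V^2)^2" by (simp flip: power_mult)
    then show ?thesis using V2 by (simp add: power2_eq_square)
  qed
  have "(norm (sh s))^2 \<le> ?V^2 + ?V^4/4" using norm_sh_le_Pc[of s] V2 V4 by simp
  also have "\<dots> \<le> (?V * (1 + ?V^2/8))^2"
    using Pc_nonneg[of s] by (simp add: power2_eq_square algebra_simps power4_eq_xxxx)
  finally have "(norm (sh s))^2 \<le> (?V * (1 + ?V^2/8))^2" .
  then have "norm (sh s) \<le> ?V * (1 + ?V^2/8)"
    by (rule power2_le_imp_le) (simp add: Pc_nonneg)
  then show ?thesis using V2 by simp
qed

lemma Pc_le_norm: "norm s \<le> 1 \<Longrightarrow> Pc s \<le> (norm s)^2"
proof -
  assume a: "norm s \<le> 1"
  have "Pc s \<le> (\<Sum>k\<in>UNIV. (s$k)^2)" unfolding Pc_def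
    by (intro sum_mono cosh_le_sq) (use a component_le_norm_cart order_trans in blast)
  then show ?thesis by (simp add: norm_sq_sum)
qed

lemma norm_sh_minus: "norm s \<le> 1 \<Longrightarrow> norm (sh s - s) \<le> (norm s)^3"
proof -
  assume a: "norm s \<le> 1"
  have "(norm (sh s - s))^2 = (\<Sum>k\<in>UNIV. (sinh (s$k) - s$k)^2)"
    by (simp add: norm_sq_sum sh_def)
  also have "\<dots> \<le> (\<Sum>k\<in>UNIV. (s$k)^2 * (norm s)^4)"
  proof (intro sum_mono)
    fix k
    have c: "\<bar>s$k\<bar> \<le> norm s" by (rule component_le_norm_cart)
    then have "\<bar>sinh (s$k) - s$k\<bar> \<le> \<bar>s$k\<bar>^3" using a by (intro sinh_minus_self) auto
    also have "\<dots> = \<bar>s$k\<bar> * \<bar>s$k\<bar>^2" by (simp add: power3_eq_cube power2_eq_square)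
    also have "\<dots> \<le> \<bar>s$k\<bar> * (norm s)^2"
      using c by (intro mult_left_mono power_mono) auto
    finally have "\<bar>sinh (s$k) - s$k\<bar> \<le> \<bar>s$k\<bar> * (norm s)^2" .
    then have "\<bar>sinh (s$k) - s$k\<bar>^2 \<le> (\<bar>s$k\<bar> * (norm s)^2)^2"
      by (intro power_mono) auto
    then show "(sinh (s$k) - s$k)^2 \<le> (s$k)^2 * (norm s)^4"
      by (simp add: power_mult_distrib power2_abs flip: power_mult)
  qed
  also have "\<dots> = (norm s)^2 * (norm s)^4" by (simp add: sum_distrib_right norm_sq_sum)
  also have "\<dots> = ((norm s)^3)^2" by (simp flip: power_add power_mult)
  finally show ?thesis by (rule power2_le_imp_le) simp
qed

lemma norm_sh_le2: "norm s \<le> 1 \<Longrightarrow> norm (sh s) \<le> 2 * norm s"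
proof -
  assume a: "norm s \<le> 1"
  have "norm (sh s) \<le> norm s + norm (sh s - s)" by (metis norm_triangle_sub add.commute)
  also have "norm (sh s - s) \<le> (norm s)^3" using a by (rule norm_sh_minus)
  also have "(norm s)^3 \<le> norm s"
  proof -
    have "norm s * norm s \<le> 1" using a by (intro mult_le_one) auto
    then have "norm s * norm s * norm s \<le> 1 * norm s" by (intro mult_right_mono) auto
    then show ?thesis by (simp add: power3_eq_cube)
  qed
  finally show ?thesis by simp
qed

lemma exp_sum_bound:
  fixes q :: "nat \<Rightarrow> real"
  assumes "n > 0"
  shows "(\<Sum>i<n. exp (- q i) * q i)
           \<le> (\<Sum>i<n. exp (- q i)) * (Min (q ` {..<n}) + real n * exp (-1))"
proof -
  define M where "M = Min (q ` {..<n})"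
  have fin: "finite (q ` {..<n})" "q ` {..<n} \<noteq> {}" using assms by auto
  have Mle: "\<And>i. i < n \<Longrightarrow> M \<le> q i" unfolding M_def using fin by (intro Min_le) auto
  obtain j where j: "j < n" "M = q j" using Min_in[OF fin] unfolding M_def by auto
  have "exp (- q j) \<le> (\<Sum>i<n. exp (- q i))"
    by (rule member_le_sum) (use j in auto)
  then have Sge: "exp (- M) \<le> (\<Sum>i<n. exp (- q i))" using j by simp
  have "(\<Sum>i<n. exp (- q i) * (q i - M)) \<le> (\<Sum>i<n. exp (- M) * exp (-1))"
  proof (intro sum_mono)
    fix i assume "i \<in> {..<n}"
    have "exp (- q i) * (q i - M) = exp (- M) * ((q i - M) * exp (- (q i - M)))"
      by (simp add: algebra_simps flip: exp_add)
    also have "\<dots> \<le> exp (- M) * exp (-1)" by (intro mult_left_mono xexp_le) auto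
    finally show "exp (- q i) * (q i - M) \<le> exp (- M) * exp (-1)" .
  qed
  also have "\<dots> = real n * exp (-1) * exp (- M)" by simp
  also have "\<dots> \<le> real n * exp (-1) * (\<Sum>i<n. exp (- q i))"
    using Sge by (intro mult_left_mono) auto
  finally have "(\<Sum>i<n. exp (- q i) * q i) - M * (\<Sum>i<n. exp (- q i))
       \<le> real n * exp (-1) * (\<Sum>i<n. exp (- q i))"
    by (simp add: algebra_simps sum_subtractf sum_distrib_left sum_distrib_right)
  then show ?thesis unfolding M_def[symmetric] by (simp add: algebra_simps)
qed

lemma unit_diff_sq:
  fixes s ws :: "'a::real_inner"
  assumes "norm ws = 1" "s \<noteq> 0"
  shows "(norm (inverse (norm s) *\<^sub>R s - ws))^2 = 2 - 2 * (s \<bullet> ws) / norm s"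
proof -
  define u where "u = inverse (norm s) *\<^sub>R s"
  have "(norm (u - ws))^2 = u \<bullet> u - 2 * (u \<bullet> ws) + ws \<bullet> ws"
    unfolding power2_norm_eq_inner by (simp add: inner_diff_left inner_diff_right inner_commute)
  also have "u \<bullet> u = 1" using assms unfolding u_def
    by (simp add: power2_norm_eq_inner[symmetric] power2_eq_square)
  also have "ws \<bullet> ws = 1" using assms by (simp add: power2_norm_eq_inner[symmetric])
  also have "u \<bullet> ws = (s \<bullet> ws) / norm s" unfolding u_def by (simp add: field_simps)
  finally show ?thesis unfolding u_def by simp
qed

lemma align_dir:
  fixes s ws :: "'a::real_inner"
  assumes "norm ws = 1" "s \<noteq> 0" "0 \<le> \<delta>" "(1 - \<delta>) * norm s \<le> s \<bullet> ws"
  shows "norm (inverse (norm s) *\<^sub>R s - ws) \<le> sqrt (2 * \<delta>)"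
proof -
  have "2 - 2 * (s \<bullet> ws) / norm s \<le> 2 * \<delta>"
    using assms by (simp add: field_simps)
  then have "(norm (inverse (norm s) *\<^sub>R s - ws))^2 \<le> 2 * \<delta>"
    using unit_diff_sq[OF assms(1,2)] by simp
  then show ?thesis by (simp add: real_le_rsqrt)
qed

lemma align_margin:
  fixes s ws z :: "'a::real_inner"
  assumes "norm ws = 1" "0 \<le> \<delta>" "(1 - \<delta>) * norm s \<le> s \<bullet> ws"
  shows "norm s * (ws \<bullet> z - norm z * sqrt (2 * \<delta>)) \<le> s \<bullet> z"
proof (cases "s = 0")
  case True then show ?thesis by simp
next
  case False
  let ?u = "inverse (norm s) *\<^sub>R s"
  have d: "norm (?u - ws) \<le> sqrt (2 * \<delta>)" using align_dir[OF assms(1) False assms(2,3)] .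
  have "ws \<bullet> z - norm z * sqrt (2 * \<delta>) \<le> ws \<bullet> z + (?u - ws) \<bullet> z"
  proof -
    have "- ((?u - ws) \<bullet> z) \<le> norm (?u - ws) * norm z"
      by (metis abs_ge_minus_self Cauchy_Schwarz_ineq2 order_trans)
    also have "\<dots> \<le> sqrt (2 * \<delta>) * norm z" using d by (intro mult_right_mono) auto
    finally show ?thesis by (simp add: mult.commute)
  qed
  also have "ws \<bullet> z + (?u - ws) \<bullet> z = ?u \<bullet> z" by (simp add: inner_diff_left)
  finally have "norm s * (ws \<bullet> z - norm z * sqrt (2 * \<delta>)) \<le> norm s * (?u \<bullet> z)"
    by (intro mult_left_mono) auto
  also have "norm s * (?u \<bullet> z) = s \<bullet> z" using False by simp
  finally show ?thesis .
qed

lemma normalize_diff: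
  fixes a b :: "'a::real_normed_vector"
  assumes "b \<noteq> 0"
  shows "norm (inverse (norm a) *\<^sub>R a - inverse (norm b) *\<^sub>R b) \<le> 2 * norm (a - b) / norm b"
proof -
  have nb: "norm b > 0" using assms by simp
  have "norm (inverse (norm a) *\<^sub>R a - inverse (norm b) *\<^sub>R b)
     \<le> norm (inverse (norm a) *\<^sub>R a - inverse (norm b) *\<^sub>R a)
       + norm (inverse (norm b) *\<^sub>R a - inverse (norm b) *\<^sub>R b)"
    using norm_triangle_ineq by (rule order_trans[rotated]) simp
  also have "norm (inverse (norm a) *\<^sub>R a - inverse (norm b) *\<^sub>R a)
      = \<bar>inverse (norm a) - inverse (norm b)\<bar> * norm a"
    by (simp flip: scaleR_diff_left)
  also have "\<dots> \<le> norm (a - b) / norm b"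
  proof (cases "a = 0")
    case True then show ?thesis using nb by simp
  next
    case False
    then have na: "norm a > 0" by simp
    have "\<bar>inverse (norm a) - inverse (norm b)\<bar> * norm a = \<bar>norm b - norm a\<bar> / norm b"
      using na nb by (simp add: field_simps abs_div)
    also have "\<dots> \<le> norm (a - b) / norm b"
      using nb by (intro divide_right_mono) (auto simp: norm_triangle_ineq3 abs_minus_commute)
    finally show ?thesis .
  qed
  also have "norm (inverse (norm b) *\<^sub>R a - inverse (norm b) *\<^sub>R b) = norm (a - b) / norm b"
  proof -
    have "inverse (norm b) *\<^sub>R a - inverse (norm b) *\<^sub>R b = inverse (norm b) *\<^sub>R (a - b)"
      by (rule scaleR_diff_right[symmetric])
    then show ?thesis using nb by (simp add: divide_inverse mult.commute)
  qed
  finally show ?thesis by simp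
qed

lemma final_dir:
  fixes s ws :: "real^'d"
  assumes "norm ws = 1" "s \<noteq> 0" "norm s \<le> 1" "0 \<le> \<delta>" "(1 - \<delta>) * norm s \<le> s \<bullet> ws"
  shows "norm (inverse (norm (sh s)) *\<^sub>R sh s - ws) \<le> 2 * (norm s)^2 + sqrt (2 * \<delta>)"
proof -
  have ns: "norm s > 0" using assms by simp
  have "norm (inverse (norm (sh s)) *\<^sub>R sh s - ws)
      \<le> norm (inverse (norm (sh s)) *\<^sub>R sh s - inverse (norm s) *\<^sub>R s)
        + norm (inverse (norm s) *\<^sub>R s - ws)"
    using norm_triangle_ineq by (rule order_trans[rotated]) simp
  also have "norm (inverse (norm (sh s)) *\<^sub>R sh s - inverse (norm s) *\<^sub>R s)
      \<le> 2 * norm (sh s - s) / norm s" using assms(2) by (rule normalize_diff)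
  also have "\<dots> \<le> 2 * (norm s)^3 / norm s"
    using norm_sh_minus[OF assms(3)] ns by (intro divide_right_mono) auto
  also have "\<dots> = 2 * (norm s)^2" using ns by (simp add: power3_eq_cube power2_eq_square)
  also have "norm (inverse (norm s) *\<^sub>R s - ws) \<le> sqrt (2 * \<delta>)"
    using align_dir[OF assms(1,2,4,5)] .
  finally show ?thesis by simp
qed

lemma mono_helper:
  fixes f f' :: "real \<Rightarrow> real"
  assumes "a \<le> b" "continuous_on {a..b} f"
    "\<And>x. a < x \<Longrightarrow> x < b \<Longrightarrow> (f has_real_derivative f' x) (at x)"
    "\<And>x. a < x \<Longrightarrow> x < b \<Longrightarrow> f' x \<ge> 0"
  shows "f a \<le> f b"
  using assms by (intro DERIV_nonneg_imp_increasing_open[OF assms(1)]) blast+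

lemma cont_from_deriv:
  fixes f f' :: "real \<Rightarrow> real"
  assumes "0 < a" "\<And>x. 0 < x \<Longrightarrow> (f has_real_derivative f' x) (at x)"
  shows "continuous_on {a..b} f"
proof (intro continuous_at_imp_continuous_on ballI)
  fix x assume "x \<in> {a..b}"
  then have "0 < x" using assms(1) by auto
  then show "isCont f x" using assms(2) DERIV_isCont by blast
qed

locale dyn =
  fixes n :: nat and zz :: "nat \<Rightarrow> real^'d" and ws :: "real^'d" and \<gamma> Z Zc :: real
    and lam al :: real and s :: "real \<Rightarrow> real^'d"
  assumes n_pos: "n > 0"
    and ws_norm: "norm ws = 1"
    and gam_pos: "\<gamma> > 0"
    and ws_marg: "\<And>i. i < n \<Longrightarrow> \<gamma> \<le> ws \<bullet> zz i"
    and marg_opt: "\<And>w. Min ((\<lambda>i. w \<bullet> zz i) ` {..<n}) \<le> \<gamma> * norm w"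
    and Z_bound: "\<And>i. i < n \<Longrightarrow> norm (zz i) \<le> Z"
    and Zc_bound: "\<And>i k. i < n \<Longrightarrow> \<bar>zz i $ k\<bar> \<le> Zc"
    and lam_pos: "lam > 0" and al_pos: "al > 0"
    and s0: "s 0 = 0"
    and s_cont: "continuous_on {0..} s"
    and s_deriv: "\<And>t k. t > 0 \<Longrightarrow> ((\<lambda>t. s t $ k) has_real_derivative
         4 / real n * (\<Sum>i<n. exp (- (2 * (al^2 * exp (-2*lam*t)) * (sh (s t) \<bullet> zz i))) * zz i $ k)) (at t)"
begin

definition "bt t = al^2 * exp (-2*lam*t)"
definition "q t i = 2 * bt t * (sh (s t) \<bullet> zz i)"
definition "Sx t = (\<Sum>i<n. exp (- q t i))"
definition "md t = 4 / real n * (\<Sum>i<n. exp (- q t i) * (zz i \<bullet> ws))"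
definition "m t = s t \<bullet> ws"
definition "P t = Pc (s t)"
definition "Pd t = 4 / real n * (\<Sum>i<n. exp (- q t i) * (sh (s t) \<bullet> zz i))"
definition "V t = sqrt (2 * P t)"
definition "Cs = real CARD('d) * Zc / \<gamma>"

lemma s_deriv': "t > 0 \<Longrightarrow> ((\<lambda>t. s t $ k) has_real_derivative
         4 / real n * (\<Sum>i<n. exp (- q t i) * zz i $ k)) (at t)"
  using s_deriv unfolding q_def bt_def by simp

lemma bt_pos: "bt t > 0" using al_pos by (simp add: bt_def)

lemma bt_anti: "t \<le> T \<Longrightarrow> bt T \<le> bt t"
  unfolding bt_def using lam_pos by (intro mult_left_mono) auto

lemma bt_le: "T - 1/lam \<le> t \<Longrightarrow> bt t \<le> exp 2 * bt T"
proof -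
  assume a: "T - 1/lam \<le> t"
  have "-2*lam*t \<le> 2 + (-2*lam*T)"
  proof -
    have "lam * (T - 1/lam) \<le> lam * t" using a lam_pos by (intro mult_left_mono) auto
    then have "lam * T - 1 \<le> lam * t" using lam_pos by (simp add: algebra_simps)
    then show ?thesis by simp
  qed
  then have "exp (-2*lam*t) \<le> exp 2 * exp (-2*lam*T)" by (simp flip: exp_add)
  then show ?thesis unfolding bt_def using al_pos by (simp add: mult_left_mono mult.left_commute)
qed

lemma m_deriv: "t > 0 \<Longrightarrow> (m has_real_derivative md t) (at t)"
proof -
  assume t: "t > 0"
  have m_eq: "m = (\<lambda>t. \<Sum>k\<in>UNIV. s t $ k * ws $ k)"
    unfolding m_def inner_vec_def by simp
  have "((\<lambda>t. \<Sum>k\<in>UNIV. s t $ k * ws $ k) has_real_derivative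
        (\<Sum>k\<in>UNIV. 4 / real n * (\<Sum>i<n. exp (- q t i) * zz i $ k) * ws $ k)) (at t)"
    by (intro DERIV_sum DERIV_cmult_right s_deriv'[OF t])
  also have "(\<Sum>k\<in>UNIV. 4 / real n * (\<Sum>i<n. exp (- q t i) * zz i $ k) * ws $ k) = md t"
    unfolding md_def inner_vec_def
    by (simp add: sum_distrib_left sum_distrib_right mult_ac sum.swap[of _ UNIV])
  finally show ?thesis unfolding m_eq .
qed

lemma P_deriv: "t > 0 \<Longrightarrow> (P has_real_derivative Pd t) (at t)"
proof -
  assume t: "t > 0"
  have P_eq: "P = (\<lambda>t. \<Sum>k\<in>UNIV. cosh (s t $ k) - 1)"
    unfolding P_def Pc_def by simp
  have "((\<lambda>t. \<Sum>k\<in>UNIV. cosh (s t $ k) - 1) has_real_derivative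
        (\<Sum>k\<in>UNIV. sinh (s t $ k) * (4 / real n * (\<Sum>i<n. exp (- q t i) * zz i $ k)))) (at t)"
  proof (intro DERIV_sum)
    fix k
    have "((\<lambda>t. cosh (s t $ k)) has_real_derivative
           sinh (s t $ k) * (4 / real n * (\<Sum>i<n. exp (- q t i) * zz i $ k))) (at t)"
      by (rule has_field_derivative_cosh[OF s_deriv'[OF t]])
    then show "((\<lambda>t. cosh (s t $ k) - 1) has_real_derivative
           sinh (s t $ k) * (4 / real n * (\<Sum>i<n. exp (- q t i) * zz i $ k))) (at t)"
      using DERIV_diff[OF _ DERIV_const[of 1]] by fastforce
  qed
  also have "(\<Sum>k\<in>UNIV. sinh (s t $ k) * (4 / real n * (\<Sum>i<n. exp (- q t i) * zz i $ k))) = Pd t"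
    unfolding Pd_def inner_vec_def sh_def
    by (simp add: sum_distrib_left sum_distrib_right mult_ac sum.swap[of _ UNIV])
  finally show ?thesis unfolding P_eq .
qed


lemma m_cont: "continuous_on {0..} m"
  unfolding m_def by (intro continuous_intros s_cont)

lemma m_cont': "0 \<le> a \<Longrightarrow> continuous_on {a..b} m"
  by (rule continuous_on_subset[OF m_cont]) auto

lemma m0: "m 0 = 0" by (simp add: m_def s0)

lemma Sx_pos: "Sx t > 0"
  unfolding Sx_def using n_pos by (intro sum_pos) auto

lemma md_ge: "4 * \<gamma> / real n * Sx t \<le> md t"
proof -
  have "(\<Sum>i<n. exp (- q t i) * \<gamma>) \<le> (\<Sum>i<n. exp (- q t i) * (zz i \<bullet> ws))"
    by (intro sum_mono mult_left_mono) (auto simp: ws_marg inner_commute)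
  then have "4 / real n * (\<Sum>i<n. exp (- q t i) * \<gamma>) \<le> md t"
    unfolding md_def by (intro mult_left_mono) auto
  then show ?thesis unfolding Sx_def by (simp add: sum_distrib_left[symmetric] mult_ac)
qed

lemma md_le: "md t \<le> 4 * Z / real n * Sx t"
proof -
  have "(\<Sum>i<n. exp (- q t i) * (zz i \<bullet> ws)) \<le> (\<Sum>i<n. exp (- q t i) * Z)"
  proof (intro sum_mono mult_left_mono)
    fix i assume "i \<in> {..<n}"
    then have "zz i \<bullet> ws \<le> norm (zz i) * norm ws" using norm_cauchy_schwarz by blast
    then show "zz i \<bullet> ws \<le> Z" using Z_bound[of i] \<open>i \<in> {..<n}\<close> ws_norm by simp
  qed auto
  then have "md t \<le> 4 / real n * (\<Sum>i<n. exp (- q t i) * Z)"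
    unfolding md_def by (intro mult_left_mono) auto
  then show ?thesis unfolding Sx_def by (simp add: sum_distrib_left[symmetric] mult_ac)
qed

lemma md_pos: "md t > 0"
  using md_ge[of t] Sx_pos[of t] gam_pos n_pos
  by (smt (verit) divide_pos_pos mult_pos_pos of_nat_0_less_iff)

lemma m_mono: "0 \<le> a \<Longrightarrow> a \<le> b \<Longrightarrow> m a \<le> m b"
  by (rule mono_helper[where f' = md]) (auto intro: m_cont' m_deriv less_imp_le md_pos)

lemma m_pos: "t > 0 \<Longrightarrow> m t > 0"
  using DERIV_pos_imp_increasing_open[of 0 t m] m_cont'[of 0 t] m_deriv md_pos m0 by force

lemma m_nonneg: "0 \<le> t \<Longrightarrow> 0 \<le> m t"
  using m_mono[of 0 t] m0 by simp

lemma s_comp_bound: "0 \<le> t \<Longrightarrow> \<bar>s t $ k\<bar> \<le> Zc / \<gamma> * m t"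
proof -
  assume t: "0 \<le> t"
  define D where "D = (\<lambda>t. 4 / real n * (\<Sum>i<n. exp (- q t i) * zz i $ k))"
  have Dle: "\<bar>D x\<bar> \<le> Zc / \<gamma> * md x" for x
  proof -
    have "\<bar>\<Sum>i<n. exp (- q x i) * zz i $ k\<bar> \<le> (\<Sum>i<n. exp (- q x i) * Zc)"
      by (rule order_trans[OF sum_abs]) (auto intro!: sum_mono simp: abs_mult Zc_bound mult_left_mono)
    also have "(\<Sum>i<n. exp (- q x i) * Zc) = Zc * Sx x" by (simp add: Sx_def sum_distrib_left mult_ac)
    finally have "\<bar>D x\<bar> \<le> 4 / real n * (Zc * Sx x)" unfolding D_def
      by (simp add: abs_mult divide_right_mono)
    also have "\<dots> = Zc / \<gamma> * (4 * \<gamma> / real n * Sx x)" using gam_pos by simp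
    also have "\<dots> \<le> Zc / \<gamma> * md x"
    proof (intro mult_left_mono md_ge)
      have "0 \<le> \<bar>zz 0 $ k\<bar>" by simp
      then show "0 \<le> Zc / \<gamma>" using Zc_bound[of 0 k] n_pos gam_pos by simp
    qed
    finally show ?thesis .
  qed
  have sc: "continuous_on {0..t} (\<lambda>t. s t $ k)"
    by (intro continuous_intros continuous_on_subset[OF s_cont]) auto
  have d: "x > 0 \<Longrightarrow> ((\<lambda>t. s t $ k) has_real_derivative D x) (at x)" for x
    unfolding D_def by (rule s_deriv')
  have dm: "x > 0 \<Longrightarrow> ((\<lambda>x. Zc / \<gamma> * m x) has_real_derivative Zc / \<gamma> * md x) (at x)" for x
    by (rule DERIV_cmult[OF m_deriv])
  have cm: "continuous_on {0..t} (\<lambda>x. Zc / \<gamma> * m x)"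
    by (intro continuous_intros m_cont') auto
  have 1: "(Zc / \<gamma> * m 0 - s 0 $ k) \<le> (Zc / \<gamma> * m t - s t $ k)"
  proof (rule mono_helper[where f' = "\<lambda>x. Zc / \<gamma> * md x - D x", OF t])
    show "continuous_on {0..t} (\<lambda>x. Zc / \<gamma> * m x - s x $ k)"
      by (intro continuous_on_diff cm sc)
    show "((\<lambda>x. Zc / \<gamma> * m x - s x $ k) has_real_derivative Zc / \<gamma> * md x - D x) (at x)"
      if "0 < x" for x using that by (intro DERIV_diff dm d)
    show "0 \<le> Zc / \<gamma> * md x - D x" for x using Dle[of x] by (simp add: abs_le_iff)
  qed
  have 2: "(Zc / \<gamma> * m 0 + s 0 $ k) \<le> (Zc / \<gamma> * m t + s t $ k)"
  proof (rule mono_helper[where f' = "\<lambda>x. Zc / \<gamma> * md x + D x", OF t])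
    show "continuous_on {0..t} (\<lambda>x. Zc / \<gamma> * m x + s x $ k)"
      by (intro continuous_on_add cm sc)
    show "((\<lambda>x. Zc / \<gamma> * m x + s x $ k) has_real_derivative Zc / \<gamma> * md x + D x) (at x)"
      if "0 < x" for x using that by (intro DERIV_add dm d)
    show "0 \<le> Zc / \<gamma> * md x + D x" for x using Dle[of x] by (simp add: abs_le_iff)
  qed
  show ?thesis using 1 2 m0 s0 by (simp add: abs_le_iff)
qed

end

context dyn begin

lemma Zc_nonneg: "0 \<le> Zc" using Zc_bound[of 0 undefined] n_pos by (meson abs_ge_zero order_trans)
lemma Z_nonneg: "0 \<le> Z" using Z_bound[of 0] n_pos by (meson norm_ge_zero order_trans)
lemma Cs_nonneg: "0 \<le> Cs" unfolding Cs_def using Zc_nonneg gam_pos by simp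

lemma s_norm_bound: "0 \<le> t \<Longrightarrow> norm (s t) \<le> Cs * m t"
proof -
  assume t: "0 \<le> t"
  have "norm (s t) \<le> (\<Sum>k\<in>UNIV. \<bar>s t $ k\<bar>)" by (rule norm_le_l1_cart)
  also have "\<dots> \<le> (\<Sum>k\<in>(UNIV::'d set). Zc / \<gamma> * m t)" by (intro sum_mono s_comp_bound t)
  also have "\<dots> = Cs * m t" by (simp add: Cs_def)
  finally show ?thesis .
qed

lemma m_le_norm: "m t \<le> norm (s t)"
  unfolding m_def using norm_cauchy_schwarz[of "s t" ws] ws_norm by simp

lemma q_eq: "q t i = ((2 * bt t) *\<^sub>R sh (s t)) \<bullet> zz i"
  by (simp add: q_def)

lemma Pd_bound: "Pd t \<le> md t * (norm (sh (s t)) + real n * exp (-1) / (2 * \<gamma> * bt t))"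
proof -
  have b: "bt t > 0" by (rule bt_pos)
  have Pd_eq: "Pd t = 2 / (real n * bt t) * (\<Sum>i<n. exp (- q t i) * q t i)"
    unfolding Pd_def q_def using b by (simp add: sum_distrib_left field_simps)
  have Mle: "Min (q t ` {..<n}) \<le> \<gamma> * (2 * bt t * norm (sh (s t)))"
  proof -
    have "q t ` {..<n} = (\<lambda>i. ((2 * bt t) *\<^sub>R sh (s t)) \<bullet> zz i) ` {..<n}"
      using q_eq by auto
    then show ?thesis using marg_opt[of "(2 * bt t) *\<^sub>R sh (s t)"] b by simp
  qed
  have "(\<Sum>i<n. exp (- q t i) * q t i) \<le> Sx t * (Min (q t ` {..<n}) + real n * exp (-1))"
    unfolding Sx_def by (rule exp_sum_bound[OF n_pos])
  also have "\<dots> \<le> Sx t * (\<gamma> * (2 * bt t * norm (sh (s t))) + real n * exp (-1))"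
    using Mle Sx_pos[of t] by (intro mult_left_mono) auto
  finally have "Pd t \<le> 2 / (real n * bt t) * (Sx t * (\<gamma> * (2 * bt t * norm (sh (s t))) + real n * exp (-1)))"
    unfolding Pd_eq using b n_pos by (intro mult_left_mono) auto
  also have "\<dots> = 4 * \<gamma> / real n * Sx t * (norm (sh (s t)) + real n * exp (-1) / (2 * \<gamma> * bt t))"
    using b gam_pos n_pos by (simp add: field_simps)
  also have "\<dots> \<le> md t * (norm (sh (s t)) + real n * exp (-1) / (2 * \<gamma> * bt t))"
    using md_ge[of t] b gam_pos by (intro mult_right_mono) auto
  finally show ?thesis .
qed

lemma V_ge: "norm (s t) \<le> V t"
  unfolding V_def using norm_le_Pc[of "s t"] by (simp add: P_def real_le_rsqrt)

lemma V_le: "norm (s t) \<le> 1 \<Longrightarrow> V t \<le> 2 * norm (s t)"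
proof -
  assume a: "norm (s t) \<le> 1"
  have "0 \<le> (norm (s t))^2" by simp
  moreover have "P t \<le> (norm (s t))^2" using Pc_le_norm[OF a] by (simp add: P_def)
  ultimately have "2 * P t \<le> 4 * (norm (s t))^2" by linarith
  then have "2 * P t \<le> (2 * norm (s t))^2" by (simp add: power_mult_distrib)
  then show ?thesis unfolding V_def by (intro real_le_lsqrt) auto
qed

lemma V_sq: "(V t)^2 = 2 * P t" unfolding V_def P_def using Pc_nonneg by simp

lemma V_deriv: "t > 0 \<Longrightarrow> P t > 0 \<Longrightarrow> (V has_real_derivative Pd t / V t) (at t)"
proof -
  assume t: "t > 0" and p: "P t > 0"
  have "((\<lambda>t. sqrt (2 * P t)) has_real_derivative inverse (sqrt (2 * P t)) / 2 * (2 * Pd t)) (at t)"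
    by (rule DERIV_chain2[OF DERIV_real_sqrt]) (use p in \<open>auto intro!: derivative_eq_intros P_deriv t\<close>)
  then show ?thesis unfolding V_def[abs_def] by (simp add: field_simps)
qed


definition "c0 T = real n * exp (-1) / (2 * \<gamma> * bt T)"

lemma c0_nonneg: "0 \<le> c0 T" unfolding c0_def using gam_pos bt_pos[of T] by simp

lemma P_pos: "t > 0 \<Longrightarrow> P t > 0"
proof -
  assume t: "t > 0"
  have "0 < m t" using m_pos[OF t] .
  also have "\<dots> \<le> V t" using m_le_norm V_ge order_trans by blast
  finally have "0 < (V t)^2" by simp
  then show ?thesis using V_sq by simp
qed

lemma lnm_deriv: "t > 0 \<Longrightarrow> ((\<lambda>t. ln (m t)) has_real_derivative md t / m t) (at t)"
proof -
  assume t: "t > 0"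
  have "((\<lambda>t. ln (m t)) has_real_derivative 1 / m t * md t) (at t)"
    by (rule DERIV_chain2[OF DERIV_ln_divide[OF m_pos[OF t]] m_deriv[OF t]])
  then show ?thesis by simp
qed

lemma integ:
  assumes t1: "0 < t1" "t1 \<le> t" "t \<le> T" and rho: "\<rho> \<le> 1"
    and sb: "\<And>\<tau>. t1 \<le> \<tau> \<Longrightarrow> \<tau> \<le> t \<Longrightarrow> norm (s \<tau>) \<le> \<rho>"
  shows "V t - m t \<le> V t1 - m t1 + \<rho>^2/4 * (m t - m t1) + c0 T * (ln (m t) - ln (m t1))"
proof -
  define F where "F \<tau> = (1 + \<rho>^2/4) * m \<tau> + c0 T * ln (m \<tau>) - V \<tau>" for \<tau>
  define F' where "F' \<tau> = (1 + \<rho>^2/4) * md \<tau> + c0 T * (md \<tau> / m \<tau>) - Pd \<tau> / V \<tau>" for \<tau>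
  have dF: "(F has_real_derivative F' \<tau>) (at \<tau>)" if "0 < \<tau>" for \<tau>
    unfolding F_def[abs_def] F'_def
    by (intro DERIV_diff DERIV_add DERIV_cmult m_deriv lnm_deriv V_deriv P_pos that)
  have "F t1 \<le> F t"
  proof (rule mono_helper[where f = F and f' = F' and a = t1 and b = t])
    show "t1 \<le> t" using t1 by simp
    show "continuous_on {t1..t} F" using dF t1 by (intro cont_from_deriv) auto
    show "(F has_real_derivative F' x) (at x)" if "t1 < x" "x < t" for x
      using that t1 by (intro dF) auto
    show "0 \<le> F' x" if x: "t1 < x" "x < t" for x
    proof -
      have x0: "0 < x" using x t1 by simp
      have sx: "norm (s x) \<le> \<rho>" using x by (intro sb) auto
      have mpos: "0 < m x" by (rule m_pos[OF x0])
      have mV: "m x \<le> V x" using m_le_norm V_ge order_trans by blast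
      have Vpos: "0 < V x" using mpos mV by simp
      have mdpos: "0 < md x" by (rule md_pos)
      have V2: "(V x)^2 / 8 \<le> \<rho>^2 / 4"
      proof -
        have "Pc (s x) \<le> (norm (s x))^2" using sx rho by (intro Pc_le_norm) auto
        also have "\<dots> \<le> \<rho>^2" using sx by (intro power_mono) auto
        finally show ?thesis using V_sq[of x] by (simp add: P_def)
      qed
      have shV: "norm (sh (s x)) \<le> V x * (1 + \<rho>^2/4)"
      proof -
        have "norm (sh (s x)) \<le> V x * (1 + (V x)^2 / 8)"
          using norm_sh_le_V[of "s x"] V_sq[of x] by (simp add: V_def P_def)
        also have "\<dots> \<le> V x * (1 + \<rho>^2/4)" using V2 Vpos by (intro mult_left_mono) auto
        finally show ?thesis .
      qed
      have cle: "real n * exp (-1) / (2 * \<gamma> * bt x) \<le> c0 T"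
        unfolding c0_def using bt_anti[of x T] x t1 bt_pos[of x] bt_pos[of T] gam_pos
        by (intro divide_left_mono mult_left_mono) auto
      have "Pd x \<le> md x * (V x * (1 + \<rho>^2/4) + c0 T)"
        using Pd_bound[of x] shV cle mdpos
        by (smt (verit, best) mult_left_mono)
      then have "Pd x / V x \<le> md x * (1 + \<rho>^2/4) + md x * c0 T / V x"
        using Vpos by (simp add: field_simps)
      also have "md x * c0 T / V x \<le> md x * c0 T / m x"
        using mpos mV mdpos c0_nonneg[of T] by (intro divide_left_mono) auto
      finally show ?thesis unfolding F'_def by (simp add: algebra_simps)
    qed
  qed
  then show ?thesis unfolding F_def by (simp add: field_simps)
qed


lemma align_decay:
  assumes t: "0 < t" "t \<le> T" and sb: "norm (s t) \<le> \<rho>" "\<rho> \<le> 1" "Z * \<rho>^2 \<le> \<gamma> / 4"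
    and d: "0 \<le> \<delta>" "Z * sqrt (2 * \<delta>) \<le> \<gamma> / 2" and al: "(1 - \<delta>) * norm (s t) \<le> m t"
  shows "md t \<le> 4 * Z * exp (- (bt T * \<gamma> / 2) * m t)"
proof -
  let ?s = "s t"
  have ns1: "norm ?s \<le> 1" using sb by simp
  have qlow: "bt T * \<gamma> / 2 * m t \<le> q t i" if i: "i < n" for i
  proof -
    have a: "norm ?s * (ws \<bullet> zz i - norm (zz i) * sqrt (2 * \<delta>)) \<le> ?s \<bullet> zz i"
      by (rule align_margin[OF ws_norm d(1)]) (use al in \<open>simp add: m_def\<close>)
    have "\<gamma> / 2 \<le> ws \<bullet> zz i - norm (zz i) * sqrt (2 * \<delta>)"
    proof -
      have "norm (zz i) * sqrt (2 * \<delta>) \<le> Z * sqrt (2 * \<delta>)"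
        using Z_bound[OF i] d(1) by (intro mult_right_mono) auto
      then show ?thesis using ws_marg[OF i] d(2) by linarith
    qed
    then have b: "norm ?s * (\<gamma> / 2) \<le> ?s \<bullet> zz i"
      using a by (meson mult_left_mono norm_ge_zero order_trans)
    have c: "- (norm ?s * (\<gamma> / 4)) \<le> (sh ?s - ?s) \<bullet> zz i"
    proof -
      have "\<bar>(sh ?s - ?s) \<bullet> zz i\<bar> \<le> norm (sh ?s - ?s) * norm (zz i)" by (rule Cauchy_Schwarz_ineq2)
      also have "\<dots> \<le> (norm ?s)^3 * Z"
        using norm_sh_minus[OF ns1] Z_bound[OF i] by (intro mult_mono) auto
      also have "(norm ?s)^3 * Z = norm ?s * (Z * (norm ?s)^2)" by (simp add: power3_eq_cube power2_eq_square)
      also have "\<dots> \<le> norm ?s * (Z * \<rho>^2)"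
        using sb Z_nonneg by (intro mult_left_mono power_mono) auto
      also have "\<dots> \<le> norm ?s * (\<gamma> / 4)" using sb by (intro mult_left_mono) auto
      finally show ?thesis by linarith
    qed
    have "sh ?s \<bullet> zz i = ?s \<bullet> zz i + (sh ?s - ?s) \<bullet> zz i" by (simp add: inner_diff_left)
    then have e: "norm ?s * (\<gamma> / 4) \<le> sh ?s \<bullet> zz i" using b c by linarith
    have "bt T * \<gamma> / 2 * m t \<le> bt t * \<gamma> / 2 * norm ?s"
      using bt_anti[OF t(2)] bt_pos[of T] gam_pos m_le_norm[of t] m_pos[OF t(1)]
      by (intro mult_mono) auto
    also have "\<dots> = 2 * bt t * (norm ?s * (\<gamma> / 4))" by simp
    also have "\<dots> \<le> 2 * bt t * (sh ?s \<bullet> zz i)" using e bt_pos[of t] by (intro mult_left_mono) auto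
    finally show ?thesis by (simp add: q_def)
  qed
  have "Sx t \<le> (\<Sum>i<n. exp (- (bt T * \<gamma> / 2 * m t)))"
    unfolding Sx_def using qlow by (intro sum_mono) auto
  also have "\<dots> = real n * exp (- (bt T * \<gamma> / 2) * m t)" by simp
  finally have "4 * Z / real n * Sx t \<le> 4 * Z / real n * (real n * exp (- (bt T * \<gamma> / 2) * m t))"
    using Z_nonneg by (intro mult_left_mono) auto
  also have "\<dots> = 4 * Z * exp (- (bt T * \<gamma> / 2) * m t)" using n_pos by simp
  finally show ?thesis using md_le[of t] by linarith
qed

lemma md_lower:
  assumes t: "0 < t" "T - 1/lam \<le> t" and sb: "norm (s t) \<le> 1"
  shows "4 * \<gamma> / real n * exp (- (4 * exp 2 * bt T * Z * Cs) * m t) \<le> md t"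
proof -
  let ?s = "s t"
  have "q t 0 \<le> 2 * bt t * (norm (sh ?s) * norm (zz 0))"
    unfolding q_def using bt_pos[of t] norm_cauchy_schwarz[of "sh ?s" "zz 0"]
    by (intro mult_left_mono) auto
  also have "\<dots> \<le> 2 * bt t * ((2 * norm ?s) * Z)"
    using norm_sh_le2[OF sb] Z_bound[of 0] n_pos bt_pos[of t] Z_nonneg
    by (intro mult_left_mono mult_mono) auto
  also have "\<dots> \<le> 2 * (exp 2 * bt T) * ((2 * (Cs * m t)) * Z)"
    using bt_le[OF t(2)] s_norm_bound[of t] t Z_nonneg bt_pos[of t] Cs_nonneg m_pos[OF t(1)]
    by (intro mult_mono mult_left_mono) auto
  also have "\<dots> = (4 * exp 2 * bt T * Z * Cs) * m t" by simp
  finally have q0: "q t 0 \<le> (4 * exp 2 * bt T * Z * Cs) * m t" .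
  have "exp (- ((4 * exp 2 * bt T * Z * Cs) * m t)) \<le> exp (- q t 0)" using q0 by simp
  also have "\<dots> \<le> Sx t" unfolding Sx_def by (rule member_le_sum) (use n_pos in auto)
  finally have "4 * \<gamma> / real n * exp (- (4 * exp 2 * bt T * Z * Cs) * m t) \<le> 4 * \<gamma> / real n * Sx t"
    using gam_pos by (intro mult_left_mono) auto
  then show ?thesis using md_ge[of t] by linarith
qed


lemma rel_err:
  assumes t: "0 < t1" "t1 \<le> \<tau>" "\<tau> \<le> T" and mt1: "m t1 = a1" and a: "0 < a1" "0 < a2"
    and mt: "a2 \<le> m \<tau>" "m \<tau> \<le> mmax" and r: "0 \<le> \<rho>" "\<rho> \<le> 1"
    and sb: "\<And>u. t1 \<le> u \<Longrightarrow> u \<le> \<tau> \<Longrightarrow> norm (s u) \<le> \<rho>"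
    and st1: "norm (s t1) \<le> Cs * a1"
    and dd: "\<delta> = 2 * Cs * a1 / a2 + \<rho>^2/4 + c0 T * (ln mmax - ln a1) / a2"
  shows "(1 - \<delta>) * norm (s \<tau>) \<le> m \<tau>"
proof -
  have I: "V \<tau> - m \<tau> \<le> V t1 - m t1 + \<rho>^2/4 * (m \<tau> - m t1) + c0 T * (ln (m \<tau>) - ln (m t1))"
    by (rule integ[OF t r(2) sb])
  have ns1: "norm (s t1) \<le> 1" using sb[of t1] t r by auto
  have "V t1 \<le> 2 * norm (s t1)" by (rule V_le[OF ns1])
  also have "\<dots> \<le> 2 * Cs * a1" using st1 by simp
  finally have v1: "V t1 \<le> 2 * Cs * a1" .
  have mpos: "0 < m \<tau>" using a mt by simp
  have lnle: "ln (m \<tau>) \<le> ln mmax" using mpos mt by simp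
  have c0n: "0 \<le> c0 T" by (rule c0_nonneg)
  have Cs0: "0 \<le> Cs" by (rule Cs_nonneg)
  have amax: "a1 \<le> mmax" using a mt mt1 m_mono t
    by (smt (verit) less_imp_le)
  have lnd: "0 \<le> ln mmax - ln a1" using a amax by simp
  have E: "V \<tau> - m \<tau> \<le> 2 * Cs * a1 + \<rho>^2/4 * m \<tau> + c0 T * (ln mmax - ln a1)"
  proof -
    have "\<rho>^2/4 * (m \<tau> - a1) \<le> \<rho>^2/4 * m \<tau>" using a by (simp add: algebra_simps)
    moreover have "c0 T * (ln (m \<tau>) - ln a1) \<le> c0 T * (ln mmax - ln a1)"
      using lnle c0n by (intro mult_left_mono) auto
    ultimately show ?thesis using I[unfolded mt1] v1 a by linarith
  qed
  have rat: "1 \<le> m \<tau> / a2" using mt a by simp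
  have "2 * Cs * a1 + \<rho>^2/4 * m \<tau> + c0 T * (ln mmax - ln a1) \<le> \<delta> * m \<tau>"
  proof -
    have scale: "X \<le> X / a2 * m \<tau>" if "0 \<le> X" for X
    proof -
      have "X * 1 \<le> X * (m \<tau> / a2)" using rat that by (intro mult_left_mono)
      then show ?thesis by simp
    qed
    have "2 * Cs * a1 \<le> 2 * Cs * a1 / a2 * m \<tau>"
      using Cs0 a by (intro scale) auto
    moreover have "c0 T * (ln mmax - ln a1) \<le> c0 T * (ln mmax - ln a1) / a2 * m \<tau>"
      using c0n lnd by (intro scale) auto
    ultimately show ?thesis unfolding dd by (simp add: algebra_simps)
  qed
  then have Vle: "norm (s \<tau>) \<le> (1 + \<delta>) * m \<tau>" using E V_ge[of \<tau>] by (simp add: algebra_simps)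
  show ?thesis
  proof (cases "\<delta> \<le> 1")
    case True
    have "(1 - \<delta>) * norm (s \<tau>) \<le> (1 - \<delta>) * ((1 + \<delta>) * m \<tau>)"
      using Vle True by (intro mult_left_mono) auto
    also have "\<dots> = (1 - \<delta>^2) * m \<tau>" by (simp add: algebra_simps power2_eq_square)
    also have "\<dots> \<le> m \<tau>" using mpos by (simp add: algebra_simps)
    finally show ?thesis .
  next
    case False
    then have "(1 - \<delta>) * norm (s \<tau>) \<le> 0" by (simp add: mult_nonpos_nonneg)
    then show ?thesis using mpos by simp
  qed
qed


lemma m_bounded_by:
  assumes "0 \<le> t" "t \<le> T" "m T \<le> mmax" shows "m t \<le> mmax" "norm (s t) \<le> Cs * mmax"
proof -
  show mt: "m t \<le> mmax" using m_mono[of t T] assms by simp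
  show "norm (s t) \<le> Cs * mmax"
    using s_norm_bound[OF assms(1)] mult_left_mono[OF mt Cs_nonneg] by simp
qed

theorem main_bound:
  assumes T: "0 < T" "1/lam \<le> T" and Zc0: "0 < Zc"
    and a: "0 < a1" "a1 \<le> a2" "a2 < mmax"
    and rho_def: "\<rho> = Cs * mmax" and r1: "\<rho> \<le> 1" "Z * \<rho>^2 \<le> \<gamma>/4"
    and delta_def: "\<delta> = 2 * Cs * a1 / a2 + \<rho>^2/4 + c0 T * (ln mmax - ln a1) / a2"
    and dsmall: "Z * sqrt (2*\<delta>) \<le> \<gamma>/2"
    and C4: "ln (exp (bt T * \<gamma> / 2 * a2) + 4 * Z * (bt T * \<gamma> / 2) * T) < bt T * \<gamma> / 2 * mmax"
    and C5: "a2 \<le> ln (1 + (4 * exp 2 * bt T * Z * Cs) * (4 * \<gamma> / real n) / lam) / (4 * exp 2 * bt T * Z * Cs)"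
  shows "norm (inverse (norm (sh (s T))) *\<^sub>R sh (s T) - ws) \<le> 2 * \<rho>^2 + sqrt (2 * \<delta>)"
proof -
  define \<kappa> where "\<kappa> = bt T * \<gamma> / 2"
  define \<kappa>' where "\<kappa>' = 4 * exp 2 * bt T * Z * Cs"
  have Cs_pos: "0 < Cs" unfolding Cs_def using Zc0 gam_pos by simp
  have Z_pos: "0 < Z"
  proof -
    have "\<gamma> \<le> ws \<bullet> zz 0" using ws_marg n_pos by simp
    also have "\<dots> \<le> norm ws * norm (zz 0)" by (rule norm_cauchy_schwarz)
    also have "\<dots> \<le> Z" using Z_bound[of 0] n_pos ws_norm by simp
    finally show ?thesis using gam_pos by simp
  qed
  have kpos: "0 < \<kappa>" unfolding \<kappa>_def using bt_pos[of T] gam_pos by simp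
  have k'pos: "0 < \<kappa>'" unfolding \<kappa>'_def using bt_pos[of T] Z_pos Cs_pos by simp
  have rho0: "0 \<le> \<rho>" unfolding rho_def using Cs_pos a by simp
  have delta0: "0 \<le> \<delta>"
  proof -
    have "0 \<le> c0 T * (ln mmax - ln a1) / a2" using c0_nonneg a by simp
    moreover have "0 \<le> 2 * Cs * a1 / a2" using Cs_pos a by simp
    ultimately show ?thesis unfolding delta_def by simp
  qed
  have mT: "m T \<le> mmax"
  proof (rule ccontr)
    assume "\<not> m T \<le> mmax"
    then have gt: "mmax < m T" by simp
    obtain ts where ts: "0 \<le> ts" "ts \<le> T" "m ts = mmax"
      using IVT'[of m 0 mmax T] m0 gt a m_cont'[of 0 T] T by auto
    obtain t2 where t2: "0 \<le> t2" "t2 \<le> ts" "m t2 = a2"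
      using IVT'[of m 0 a2 ts] m0 ts a m_cont'[of 0 ts] by auto
    obtain t1 where t1: "0 \<le> t1" "t1 \<le> t2" "m t1 = a1"
      using IVT'[of m 0 a1 t2] m0 t2 a m_cont'[of 0 t2] by auto
    have t1pos: "0 < t1" using t1 m0 a by (cases "t1 = 0") auto
    have bnd: "m u \<le> mmax" "norm (s u) \<le> \<rho>" if "0 \<le> u" "u \<le> ts" for u
    proof -
      show mu: "m u \<le> mmax" using m_mono[of u ts] that ts by simp
      show "norm (s u) \<le> \<rho>"
        using s_norm_bound[OF that(1)] mult_left_mono[OF mu Cs_nonneg] rho_def by simp
    qed
    have decay: "md u \<le> 4 * Z * exp (- \<kappa> * m u)" if u: "t2 \<le> u" "u \<le> ts" for u
    proof -
      have u0: "0 < u" using t1pos t1 u by simp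
      have al: "(1 - \<delta>) * norm (s u) \<le> m u"
      proof (rule rel_err[where ?t1.0 = t1 and T = T and ?a1.0 = a1 and ?a2.0 = a2 and mmax = mmax and \<rho> = \<rho>])
        show "0 < t1" "t1 \<le> u" "u \<le> T" "m t1 = a1" "0 < a1" "0 < a2"
          using t1pos t1 u ts a by auto
        show "a2 \<le> m u" using m_mono[of t2 u] t2 u by simp
        show "m u \<le> mmax" using bnd u t2 by simp
        show "0 \<le> \<rho>" "\<rho> \<le> 1" using rho0 r1 by auto
        show "norm (s v) \<le> \<rho>" if "t1 \<le> v" "v \<le> u" for v using bnd that t1 u by simp
        show "norm (s t1) \<le> Cs * a1" using s_norm_bound[of t1] t1 by simp
        show "\<delta> = 2 * Cs * a1 / a2 + \<rho>^2/4 + c0 T * (ln mmax - ln a1) / a2" by (rule delta_def)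
      qed
      show ?thesis unfolding \<kappa>_def
        by (rule align_decay[OF u0 _ _ r1 delta0 dsmall al]) (use u ts bnd t2 in auto)
    qed
    define G where "G u = 4 * Z * \<kappa> * u - exp (\<kappa> * m u)" for u
    have "G t2 \<le> G ts"
    proof (rule mono_helper[where f = G and f' = "\<lambda>u. 4 * Z * \<kappa> - \<kappa> * md u * exp (\<kappa> * m u)"
          and a = t2 and b = ts])
      have t2pos: "0 < t2" using t1pos t1 by simp
      have dG: "(G has_real_derivative 4 * Z * \<kappa> - \<kappa> * md u * exp (\<kappa> * m u)) (at u)" if "0 < u" for u
      proof -
        have "((\<lambda>u. exp (\<kappa> * m u)) has_real_derivative exp (\<kappa> * m u) * (\<kappa> * md u)) (at u)"
          by (rule DERIV_chain2[OF DERIV_exp DERIV_cmult[OF m_deriv[OF that]]])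
        then show ?thesis unfolding G_def[abs_def]
          by (auto intro!: derivative_eq_intros m_deriv[OF that] simp: mult_ac)
      qed
      show "t2 \<le> ts" using t2 by simp
      show "continuous_on {t2..ts} G" using dG t2pos by (intro cont_from_deriv) auto
      show "(G has_real_derivative 4 * Z * \<kappa> - \<kappa> * md x * exp (\<kappa> * m x)) (at x)"
        if "t2 < x" "x < ts" for x using that t2pos by (intro dG) auto
      show "0 \<le> 4 * Z * \<kappa> - \<kappa> * md x * exp (\<kappa> * m x)" if "t2 < x" "x < ts" for x
      proof -
        have "md x * exp (\<kappa> * m x) \<le> 4 * Z * exp (- \<kappa> * m x) * exp (\<kappa> * m x)"
          using decay[of x] that by (intro mult_right_mono) auto
        also have "\<dots> = 4 * Z" by (simp flip: exp_add)
        finally show ?thesis using kpos by (simp add: mult_left_mono mult.assoc)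
      qed
    qed
    then have "exp (\<kappa> * mmax) \<le> exp (\<kappa> * a2) + 4 * Z * \<kappa> * (ts - t2)"
      unfolding G_def using ts t2 by (simp add: algebra_simps)
    also have "\<dots> \<le> exp (\<kappa> * a2) + 4 * Z * \<kappa> * T"
      using ts t2 Z_pos kpos by (intro add_left_mono mult_left_mono) auto
    finally have ee: "exp (\<kappa> * mmax) \<le> exp (\<kappa> * a2) + 4 * Z * \<kappa> * T" .
    have "0 \<le> 4 * Z * \<kappa> * T" using Z_pos kpos T by simp
    then have "0 < exp (\<kappa> * a2) + 4 * Z * \<kappa> * T" by (simp add: add_pos_nonneg)
    then have "\<kappa> * mmax \<le> ln (exp (\<kappa> * a2) + 4 * Z * \<kappa> * T)"
      using ee by (subst ln_ge_iff) auto
    then show False using C4 unfolding \<kappa>_def by (simp add: mult_ac)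
  qed
  have bndT: "m u \<le> mmax" "norm (s u) \<le> \<rho>" if "0 \<le> u" "u \<le> T" for u
    using m_bounded_by[OF that mT] rho_def by auto
  have mlow: "a2 \<le> m T"
  proof -
    define H where "H u = exp (\<kappa>' * m u) - \<kappa>' * (4 * \<gamma> / real n) * u" for u
    have T0: "0 \<le> T - 1/lam" using T by simp
    have "H (T - 1/lam) \<le> H T"
    proof (rule mono_helper[where f = H and f' = "\<lambda>u. \<kappa>' * md u * exp (\<kappa>' * m u) - \<kappa>' * (4 * \<gamma> / real n)"
          and a = "T - 1/lam" and b = T])
      show "T - 1/lam \<le> T" using lam_pos by simp
      show "continuous_on {T - 1/lam..T} H"
        unfolding H_def by (intro continuous_intros m_cont' T0)
      show "(H has_real_derivative \<kappa>' * md x * exp (\<kappa>' * m x) - \<kappa>' * (4 * \<gamma> / real n)) (at x)"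
        if "T - 1/lam < x" "x < T" for x
      proof -
        have x0: "0 < x" using that T0 by simp
        have "((\<lambda>u. exp (\<kappa>' * m u)) has_real_derivative exp (\<kappa>' * m x) * (\<kappa>' * md x)) (at x)"
          by (rule DERIV_chain2[OF DERIV_exp DERIV_cmult[OF m_deriv[OF x0]]])
        then show ?thesis unfolding H_def[abs_def]
          using n_pos by (auto intro!: derivative_eq_intros m_deriv[OF x0] simp: mult_ac)
      qed
      show "0 \<le> \<kappa>' * md x * exp (\<kappa>' * m x) - \<kappa>' * (4 * \<gamma> / real n)"
        if x: "T - 1/lam < x" "x < T" for x
      proof -
        have x0: "0 < x" using x T0 by simp
        have "4 * \<gamma> / real n * exp (- \<kappa>' * m x) \<le> md x" unfolding \<kappa>'_def
          by (rule md_lower[OF x0]) (use x x0 bndT[of x] r1 in auto)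
        then have "4 * \<gamma> / real n * exp (- \<kappa>' * m x) * exp (\<kappa>' * m x) \<le> md x * exp (\<kappa>' * m x)"
          by (intro mult_right_mono) auto
        then have "4 * \<gamma> / real n * (exp (- \<kappa>' * m x) * exp (\<kappa>' * m x)) \<le> md x * exp (\<kappa>' * m x)"
          by (simp add: mult.assoc)
        moreover have "exp (- \<kappa>' * m x) * exp (\<kappa>' * m x) = 1" by (simp flip: exp_add)
        ultimately have "4 * \<gamma> / real n \<le> md x * exp (\<kappa>' * m x)" by simp
        then have "\<kappa>' * (4 * \<gamma> / real n) \<le> \<kappa>' * (md x * exp (\<kappa>' * m x))"
          using k'pos by (intro mult_left_mono) auto
        then show ?thesis by (simp add: mult.assoc)
      qed
    qed
    then have "exp (\<kappa>' * m (T - 1/lam)) + \<kappa>' * (4 * \<gamma> / real n) / lam \<le> exp (\<kappa>' * m T)"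
      unfolding H_def using lam_pos by (simp add: algebra_simps diff_divide_distrib)
    moreover have "1 \<le> exp (\<kappa>' * m (T - 1/lam))" using m_nonneg[OF T0] k'pos by simp
    ultimately have "1 + \<kappa>' * (4 * \<gamma> / real n) / lam \<le> exp (\<kappa>' * m T)" by linarith
    then have "ln (1 + \<kappa>' * (4 * \<gamma> / real n) / lam) \<le> \<kappa>' * m T"
    proof -
      have "0 \<le> \<kappa>' * (4 * \<gamma> / real n) / lam" using k'pos gam_pos lam_pos n_pos by simp
      then have "0 < 1 + \<kappa>' * (4 * \<gamma> / real n) / lam" by linarith
      then have "ln (1 + \<kappa>' * (4 * \<gamma> / real n) / lam) \<le> ln (exp (\<kappa>' * m T))"
        using \<open>1 + \<kappa>' * (4 * \<gamma> / real n) / lam \<le> exp (\<kappa>' * m T)\<close> by (subst ln_le_cancel_iff) auto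
      then show ?thesis by simp
    qed
    then have "ln (1 + \<kappa>' * (4 * \<gamma> / real n) / lam) / \<kappa>' \<le> m T"
      using k'pos by (simp add: field_simps)
    then show ?thesis using C5 unfolding \<kappa>'_def by simp
  qed
  obtain t1 where t1: "0 \<le> t1" "t1 \<le> T" "m t1 = a1"
    using IVT'[of m 0 a1 T] m0 mlow a m_cont'[of 0 T] T by auto
  have t1pos: "0 < t1" using t1 m0 a by (cases "t1 = 0") auto
  have al: "(1 - \<delta>) * norm (s T) \<le> m T"
  proof (rule rel_err[where ?t1.0 = t1 and T = T and ?a1.0 = a1 and ?a2.0 = a2 and mmax = mmax and \<rho> = \<rho>])
    show "0 < t1" "t1 \<le> T" "T \<le> T" "m t1 = a1" "0 < a1" "0 < a2"
      using t1pos t1 a by auto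
    show "a2 \<le> m T" by (rule mlow)
    show "m T \<le> mmax" by (rule mT)
    show "0 \<le> \<rho>" "\<rho> \<le> 1" using rho0 r1 by auto
    show "norm (s v) \<le> \<rho>" if "t1 \<le> v" "v \<le> T" for v using bndT that t1 by simp
    show "norm (s t1) \<le> Cs * a1" using s_norm_bound[of t1] t1 by simp
    show "\<delta> = 2 * Cs * a1 / a2 + \<rho>^2/4 + c0 T * (ln mmax - ln a1) / a2" by (rule delta_def)
  qed
  have sT0: "s T \<noteq> 0" using m_pos[OF T(1)] by (auto simp: m_def)
  have sT1: "norm (s T) \<le> \<rho>" using bndT[of T] T by simp
  have "norm (inverse (norm (sh (s T))) *\<^sub>R sh (s T) - ws) \<le> 2 * (norm (s T))^2 + sqrt (2 * \<delta>)"
    by (rule final_dir[OF ws_norm sT0 _ delta0 al[unfolded m_def]]) (use sT1 r1 in auto)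
  also have "\<dots> \<le> 2 * \<rho>^2 + sqrt (2 * \<delta>)"
    using sT1 by (simp add: power_mono)
  finally show ?thesis .
qed

end

definition "qq (zz :: nat \<Rightarrow> real^'d) \<theta> i = (\<Sum>k\<in>UNIV. ((fst \<theta> $ k)^2 - (snd \<theta> $ k)^2) * zz i $ k)"
definition "Rk n zz \<theta> k = (\<Sum>i<n. exp (- qq zz \<theta> i) * zz i $ k)"
definition "grad lam n zz \<theta> = ((\<chi> k. -(2 / real n) * Rk n zz \<theta> k * fst \<theta> $ k + lam * fst \<theta> $ k),
                               (\<chi> k. (2 / real n) * Rk n zz \<theta> k * snd \<theta> $ k + lam * snd \<theta> $ k))"

lemma loss_eq:
  "reg_loss lam n x y \<theta> = (1 / real n) * (\<Sum>i<n. exp (- qq (\<lambda>i. y i *\<^sub>R x i) \<theta> i)) + lam / 2 * (\<theta> \<bullet> \<theta>)"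
  unfolding reg_loss_def exp_loss_def qq_def eff_weight_def inner_vec_def
  by (simp add: sum_distrib_left mult_ac power2_norm_eq_inner[symmetric] sum_negf)

lemma qq_deriv: "((\<lambda>\<theta>. qq zz \<theta> i) has_derivative
   (\<lambda>h. \<Sum>k\<in>UNIV. (2 * fst \<theta> $ k * fst h $ k - 2 * snd \<theta> $ k * snd h $ k) * zz i $ k)) (at \<theta>)"
  unfolding qq_def
  apply (rule has_derivative_eq_rhs)
   apply (auto intro!: derivative_eq_intros bounded_linear.has_derivative[OF bounded_linear_vec_nth])
  apply (simp add: mult_ac)
  done


lemma loss_deriv:
  fixes x :: "nat \<Rightarrow> real^'d" and \<theta> :: "(real^'d) \<times> (real^'d)"
  assumes n: "n > 0"
  shows "(reg_loss lam n x y has_derivative (\<lambda>h. grad lam n (\<lambda>i. y i *\<^sub>R x i) \<theta> \<bullet> h)) (at \<theta>)"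
proof -
  define zz where "zz = (\<lambda>i. y i *\<^sub>R x i)"
  have eq: "reg_loss lam n x y = (\<lambda>\<theta>. (1 / real n) * (\<Sum>i<n. exp (- qq zz \<theta> i)) + lam / 2 * (\<theta> \<bullet> \<theta>))"
    by (rule ext) (simp add: loss_eq zz_def)
  have "((\<lambda>\<theta>. (1 / real n) * (\<Sum>i<n. exp (- qq zz \<theta> i)) + lam / 2 * (\<theta> \<bullet> \<theta>)) has_derivative
     (\<lambda>h. (1 / real n) * (\<Sum>i<n. exp (- qq zz \<theta> i) * (- (\<Sum>k\<in>UNIV. (2 * fst \<theta> $ k * fst h $ k - 2 * snd \<theta> $ k * snd h $ k) * zz i $ k)))
          + lam / 2 * (h \<bullet> \<theta> + \<theta> \<bullet> h))) (at \<theta>)"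
    apply (rule has_derivative_eq_rhs)
     apply (auto intro!: derivative_eq_intros qq_deriv simp: n)
     apply (use n in simp)
    apply (rule ext)
    apply (simp add: mult_ac)
    done
  moreover have "(\<lambda>h. (1 / real n) * (\<Sum>i<n. exp (- qq zz \<theta> i) * (- (\<Sum>k\<in>UNIV. (2 * fst \<theta> $ k * fst h $ k - 2 * snd \<theta> $ k * snd h $ k) * zz i $ k)))
          + lam / 2 * (h \<bullet> \<theta> + \<theta> \<bullet> h)) = (\<lambda>h. grad lam n zz \<theta> \<bullet> h)"
  proof (rule ext)
    fix h :: "(real^'d) \<times> (real^'d)"
    have "grad lam n zz \<theta> \<bullet> h = (\<Sum>k\<in>UNIV. (-(2 / real n) * Rk n zz \<theta> k * fst \<theta> $ k + lam * fst \<theta> $ k) * fst h $ k)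
        + (\<Sum>k\<in>UNIV. ((2 / real n) * Rk n zz \<theta> k * snd \<theta> $ k + lam * snd \<theta> $ k) * snd h $ k)"
      unfolding grad_def inner_prod_def inner_vec_def by simp
    also have "\<dots> = (1 / real n) * (\<Sum>i<n. exp (- qq zz \<theta> i) * (- (\<Sum>k\<in>UNIV. (2 * fst \<theta> $ k * fst h $ k - 2 * snd \<theta> $ k * snd h $ k) * zz i $ k)))
          + lam / 2 * (h \<bullet> \<theta> + \<theta> \<bullet> h)"
      unfolding Rk_def inner_prod_def inner_vec_def
      by (simp add: algebra_simps sum.distrib sum_distrib_left sum_distrib_right sum_subtractf sum_negf sum.swap[of _ UNIV]
          diff_divide_distrib add_divide_distrib)
    finally show "(1 / real n) * (\<Sum>i<n. exp (- qq zz \<theta> i) * (- (\<Sum>k\<in>UNIV. (2 * fst \<theta> $ k * fst h $ k - 2 * snd \<theta> $ k * snd h $ k) * zz i $ k)))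
          + lam / 2 * (h \<bullet> \<theta> + \<theta> \<bullet> h) = grad lam n zz \<theta> \<bullet> h" by simp
  qed
  ultimately show ?thesis unfolding eq zz_def by simp
qed

lemma const_helper:
  fixes f :: "real \<Rightarrow> real"
  assumes "0 \<le> t" "continuous_on {0..t} f" "\<And>x. 0 < x \<Longrightarrow> x < t \<Longrightarrow> (f has_real_derivative 0) (at x)"
  shows "f t = f 0"
proof -
  have "f 0 \<le> f t" by (rule mono_helper[where f = f and a = 0 and b = t and f' = "\<lambda>_. 0"]) (use assms in auto)
  moreover have "(\<lambda>x. - f x) 0 \<le> (\<lambda>x. - f x) t"
  proof (rule mono_helper[where f = "\<lambda>x. - f x" and a = 0 and b = t and f' = "\<lambda>_. 0"])
    show "continuous_on {0..t} (\<lambda>x. - f x)" using assms(2) by (rule continuous_on_minus)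
    show "((\<lambda>x. - f x) has_real_derivative 0) (at x)" if "0 < x" "x < t" for x
      using DERIV_minus[OF assms(3)[OF that]] by simp
  qed (use assms in auto)
  ultimately show ?thesis by simp
qed

lemma flow_facts:
  fixes x :: "nat \<Rightarrow> real^'d" and \<theta> :: "real \<Rightarrow> (real^'d) \<times> (real^'d)"
  assumes n: "n > 0" and lam: "lam > 0" and al: "al > 0"
    and flow: "is_gradient_flow (reg_loss lam n x y) ((\<chi> k. al), (\<chi> k. al)) \<theta>"
  defines "zz \<equiv> \<lambda>i. y i *\<^sub>R x i"
  defines "u \<equiv> \<lambda>t k. fst (\<theta> t) $ k" and "v \<equiv> \<lambda>t k. snd (\<theta> t) $ k"
  shows "\<And>t k. 0 \<le> t \<Longrightarrow> ((\<lambda>t. u t k) has_real_derivative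
            (2 / real n) * Rk n zz (\<theta> t) k * u t k - lam * u t k) (at t within {0..})"
    and "\<And>t k. 0 \<le> t \<Longrightarrow> ((\<lambda>t. v t k) has_real_derivative
            - (2 / real n) * Rk n zz (\<theta> t) k * v t k - lam * v t k) (at t within {0..})"
    and "u 0 = (\<lambda>k. al)" "v 0 = (\<lambda>k. al)"
proof -
  have dd: "(\<theta> has_vector_derivative - grad lam n zz (\<theta> t)) (at t within {0..})" if t: "0 \<le> t" for t
  proof -
    obtain g where g: "(reg_loss lam n x y has_derivative (\<lambda>h. g \<bullet> h)) (at (\<theta> t))"
       "(\<theta> has_vector_derivative - g) (at t within {0..})"
      using flow t unfolding is_gradient_flow_def by blast
    have eq: "(\<lambda>h. g \<bullet> h) = (\<lambda>h. grad lam n zz (\<theta> t) \<bullet> h)"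
      by (rule has_derivative_unique[OF g(1)]) (unfold zz_def, rule loss_deriv[OF n])
    have "g \<bullet> (g - grad lam n zz (\<theta> t)) = grad lam n zz (\<theta> t) \<bullet> (g - grad lam n zz (\<theta> t))"
      using fun_cong[OF eq, of "g - grad lam n zz (\<theta> t)"] by simp
    then have "(g - grad lam n zz (\<theta> t)) \<bullet> (g - grad lam n zz (\<theta> t)) = 0"
      by (simp add: inner_diff_left)
    then have "g = grad lam n zz (\<theta> t)" by simp
    then show ?thesis using g(2) by simp
  qed
  have bl1: "bounded_linear (\<lambda>p::(real^'d)\<times>(real^'d). fst p $ k)" for k
    by (rule bounded_linear_compose[OF bounded_linear_vec_nth bounded_linear_fst])
  have bl2: "bounded_linear (\<lambda>p::(real^'d)\<times>(real^'d). snd p $ k)" for k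
    by (rule bounded_linear_compose[OF bounded_linear_vec_nth bounded_linear_snd])
  show "((\<lambda>t. u t k) has_real_derivative
            (2 / real n) * Rk n zz (\<theta> t) k * u t k - lam * u t k) (at t within {0..})" if "0 \<le> t" for t k
    using bounded_linear.has_vector_derivative[OF bl1 dd[OF that], of k]
    unfolding has_real_derivative_iff_has_vector_derivative u_def grad_def by simp
  show "((\<lambda>t. v t k) has_real_derivative
            - (2 / real n) * Rk n zz (\<theta> t) k * v t k - lam * v t k) (at t within {0..})" if "0 \<le> t" for t k
    using bounded_linear.has_vector_derivative[OF bl2 dd[OF that], of k]
    unfolding has_real_derivative_iff_has_vector_derivative v_def grad_def by simp
  show "u 0 = (\<lambda>k. al)" "v 0 = (\<lambda>k. al)"
    using flow unfolding is_gradient_flow_def u_def v_def by auto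
qed

lemma sinh_ln_eq:
  fixes a b :: real assumes "0 < a" "0 < b"
  shows "2 * (a * b) * sinh (ln a - ln b) = a^2 - b^2"
proof -
  have "exp (ln a - ln b) = a / b" using assms by (simp add: exp_diff)
  moreover have "exp (- (ln a - ln b)) = b / a" using assms by (simp add: exp_diff)
  ultimately have "2 * (a * b) * sinh (ln a - ln b) = (a * b) * (a / b - b / a)"
    unfolding sinh_def by simp
  also have "\<dots> = a^2 - b^2" using assms by (simp add: field_simps power2_eq_square)
  finally show ?thesis .
qed

lemma flow_dyn:
  fixes x :: "nat \<Rightarrow> real^'d" and \<theta> :: "real \<Rightarrow> (real^'d) \<times> (real^'d)"
  assumes n: "n > 0" and lam: "lam > 0" and al: "al > 0"
    and flow: "is_gradient_flow (reg_loss lam n x y) ((\<chi> k. al), (\<chi> k. al)) \<theta>"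
  defines "zz \<equiv> \<lambda>i. y i *\<^sub>R x i"
  defines "s \<equiv> \<lambda>t. \<chi> k. ln (fst (\<theta> t) $ k) - ln (snd (\<theta> t) $ k)"
  shows "s 0 = 0" "continuous_on {0..} s"
    "\<And>t k. t > 0 \<Longrightarrow> ((\<lambda>t. s t $ k) has_real_derivative
         4 / real n * (\<Sum>i<n. exp (- (2 * (al^2 * exp (-2*lam*t)) * (sh (s t) \<bullet> zz i))) * zz i $ k)) (at t)"
    "\<And>t. 0 \<le> t \<Longrightarrow> eff_weight (\<theta> t) = (2 * (al^2 * exp (-2*lam*t))) *\<^sub>R sh (s t)"
proof -
  define u where "u = (\<lambda>t k. fst (\<theta> t) $ k)"
  define v where "v = (\<lambda>t k. snd (\<theta> t) $ k)"
  define bt where "bt = (\<lambda>t. al^2 * exp (-2*lam*t))"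
  note ff = flow_facts[OF n lam al flow, folded zz_def u_def v_def]
  have u0: "u 0 k = al" for k unfolding u_def using fun_cong[OF ff(3), of k] by simp
  have v0: "v 0 k = al" for k unfolding v_def using fun_cong[OF ff(4), of k] by simp
  have du: "((\<lambda>t. u t k) has_real_derivative
            (2 / real n) * Rk n zz (\<theta> t) k * u t k - lam * u t k) (at t)" if "0 < t" for t k
    using ff(1)[of t k] that at_within_interior[of t "{0..}"] by (simp add: u_def)
  have dv: "((\<lambda>t. v t k) has_real_derivative
            - (2 / real n) * Rk n zz (\<theta> t) k * v t k - lam * v t k) (at t)" if "0 < t" for t k
    using ff(2)[of t k] that at_within_interior[of t "{0..}"] by (simp add: v_def)
  have cu: "continuous_on {0..} (\<lambda>t. u t k)" for k
  proof (rule DERIV_continuous_on)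
    fix t :: real assume "t \<in> {0..}"
    then show "((\<lambda>t. u t k) has_real_derivative
            (2 / real n) * Rk n zz (\<theta> t) k * u t k - lam * u t k) (at t within {0..})"
      using ff(1)[of t k] by (simp add: u_def)
  qed
  have cv: "continuous_on {0..} (\<lambda>t. v t k)" for k
  proof (rule DERIV_continuous_on)
    fix t :: real assume "t \<in> {0..}"
    then show "((\<lambda>t. v t k) has_real_derivative
            - (2 / real n) * Rk n zz (\<theta> t) k * v t k - lam * v t k) (at t within {0..})"
      using ff(2)[of t k] by (simp add: v_def)
  qed
  have prod: "u t k * v t k = bt t" if t: "0 \<le> t" for t k
  proof -
    define w where "w = (\<lambda>t. u t k * v t k * exp (2 * lam * t))"
    have "w t = w 0"
    proof (rule const_helper[OF t])
      show "continuous_on {0..t} w" unfolding w_def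
        by (intro continuous_intros continuous_on_subset[OF cu] continuous_on_subset[OF cv]) auto
      show "(w has_real_derivative 0) (at x)" if "0 < x" "x < t" for x
      proof -
        have "(w has_real_derivative
           ((2 / real n) * Rk n zz (\<theta> x) k * u x k - lam * u x k) * v x k * exp (2 * lam * x)
           + u x k * (- (2 / real n) * Rk n zz (\<theta> x) k * v x k - lam * v x k) * exp (2 * lam * x)
           + u x k * v x k * (exp (2 * lam * x) * (2 * lam))) (at x)"
          unfolding w_def using du[OF that(1)] dv[OF that(1)]
          by (auto intro!: derivative_eq_intros simp: algebra_simps)
        then show ?thesis by (simp add: algebra_simps)
      qed
    qed
    then have "u t k * v t k * exp (2 * lam * t) = al^2"
      unfolding w_def using u0 v0 by (simp add: power2_eq_square)
    then show ?thesis unfolding bt_def by (simp add: exp_minus field_simps)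
  qed
  have btpos: "0 < bt t" for t unfolding bt_def using al by simp
  have upos: "0 < u t k" if t: "0 \<le> t" for t k
  proof (rule ccontr)
    assume "\<not> 0 < u t k"
    then obtain \<tau> where tau: "0 \<le> \<tau>" "\<tau> \<le> t" "u \<tau> k = 0"
      using IVT2'[of "\<lambda>t. u t k" t 0 0] u0 al t continuous_on_subset[OF cu, of "{0..t}"] by force
    then show False using prod[of \<tau> k] btpos[of \<tau>] by simp
  qed
  have vpos: "0 < v t k" if t: "0 \<le> t" for t k
  proof (rule ccontr)
    assume "\<not> 0 < v t k"
    then obtain \<tau> where tau: "0 \<le> \<tau>" "\<tau> \<le> t" "v \<tau> k = 0"
      using IVT2'[of "\<lambda>t. v t k" t 0 0] v0 al t continuous_on_subset[OF cv, of "{0..t}"] by force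
    then show False using prod[of \<tau> k] btpos[of \<tau>] by simp
  qed
  have s_eq: "s = (\<lambda>t. \<chi> k. ln (u t k) - ln (v t k))" unfolding s_def u_def v_def by simp
  show "s 0 = 0" unfolding s_eq using u0 v0 by (simp add: vec_eq_iff)
  show "continuous_on {0..} s" unfolding s_eq
    by (intro continuous_on_vec_lambda continuous_on_diff continuous_on_ln cu cv)
      (auto, (metis less_irrefl upos vpos)+)
  have ew: "eff_weight (\<theta> t) = (2 * bt t) *\<^sub>R sh (s t)" if t: "0 \<le> t" for t
    unfolding eff_weight_def sh_def s_eq vec_eq_iff
  proof (simp, intro allI)
    fix i
    show "(fst (\<theta> t) $ i)\<^sup>2 - (snd (\<theta> t) $ i)\<^sup>2 = 2 * bt t * sinh (ln (u t i) - ln (v t i))"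
      using sinh_ln_eq[OF upos[OF t, of i] vpos[OF t, of i]] prod[OF t, of i] by (simp add: u_def v_def)
  qed
  then show "eff_weight (\<theta> t) = (2 * (al^2 * exp (-2*lam*t))) *\<^sub>R sh (s t)" if "0 \<le> t" for t
    using that unfolding bt_def by simp
  show "((\<lambda>t. s t $ k) has_real_derivative
         4 / real n * (\<Sum>i<n. exp (- (2 * (al^2 * exp (-2*lam*t)) * (sh (s t) \<bullet> zz i))) * zz i $ k)) (at t)"
    if t: "t > 0" for t k
  proof -
    have qq_eq: "qq zz (\<theta> t) i = 2 * (al^2 * exp (-2*lam*t)) * (sh (s t) \<bullet> zz i)" for i
    proof -
      have "qq zz (\<theta> t) i = eff_weight (\<theta> t) \<bullet> zz i"
        unfolding qq_def eff_weight_def inner_vec_def by simp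
      also have "\<dots> = 2 * (al^2 * exp (-2*lam*t)) * (sh (s t) \<bullet> zz i)"
        using ew[of t] t unfolding bt_def by simp
      finally show ?thesis .
    qed
    have "((\<lambda>t. ln (u t k) - ln (v t k)) has_real_derivative
        ((2 / real n) * Rk n zz (\<theta> t) k * u t k - lam * u t k) / u t k
        - (- (2 / real n) * Rk n zz (\<theta> t) k * v t k - lam * v t k) / v t k) (at t)"
      using du[OF t, of k] dv[OF t, of k] upos[of t k] vpos[of t k] t
      by (auto intro!: derivative_eq_intros simp: field_simps)
    also have "((2 / real n) * Rk n zz (\<theta> t) k * u t k - lam * u t k) / u t k
        - (- (2 / real n) * Rk n zz (\<theta> t) k * v t k - lam * v t k) / v t k
        = 4 / real n * Rk n zz (\<theta> t) k"
      using upos[of t k] vpos[of t k] t by (simp add: field_simps)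
    also have "Rk n zz (\<theta> t) k = (\<Sum>i<n. exp (- (2 * (al^2 * exp (-2*lam*t)) * (sh (s t) \<bullet> zz i))) * zz i $ k)"
      unfolding Rk_def qq_eq ..
    finally show ?thesis unfolding s_eq by simp
  qed
qed

lemma asy_T: "0 < c \<Longrightarrow> c < 1 \<Longrightarrow> eventually (\<lambda>\<alpha>::real. 1 \<le> (1-c) * ln \<alpha>) at_top"
  by real_asymp

lemma asy_a1: "eventually (\<lambda>\<alpha>::real. 1 / sqrt (ln \<alpha>) \<le> sqrt (ln \<alpha>)) at_top"
  by real_asymp

lemma asy_a2: "0 < K \<Longrightarrow> eventually (\<lambda>\<alpha>::real. sqrt (ln \<alpha>) < K * ln \<alpha>) at_top"
  by real_asymp

lemma asy_rho: "0 < A \<Longrightarrow> 0 < c \<Longrightarrow> ((\<lambda>\<alpha>::real. A * ln \<alpha> / \<alpha> powr (2*c)) \<longlongrightarrow> 0) at_top"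
  by real_asymp

lemma asy_delta:
  assumes "0 < Cs" "0 < K" "0 < N" "0 < \<gamma>" "0 < c"
  shows "((\<lambda>\<alpha>::real. 2 * Cs * (1 / (\<alpha> powr (2*c) * sqrt (ln \<alpha>))) / (sqrt (ln \<alpha>) / \<alpha> powr (2*c))
     + (Cs * (K * ln \<alpha> / \<alpha> powr (2*c)))^2 / 4
     + N / (2 * \<gamma> * \<alpha> powr (2*c)) * (ln (K * ln \<alpha> / \<alpha> powr (2*c)) - ln (1 / (\<alpha> powr (2*c) * sqrt (ln \<alpha>))))
        / (sqrt (ln \<alpha>) / \<alpha> powr (2*c))) \<longlongrightarrow> 0) at_top"
  using assms by real_asymp

lemma asy_C4:
  assumes "0 < Z" "0 < \<gamma>" "0 < c" "c < 1" "0 < p" "0 < k1"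
  shows "eventually (\<lambda>\<alpha>::real. ln (exp (\<alpha> powr (2*c) * \<gamma> / 2 * (sqrt (ln \<alpha>) / \<alpha> powr (2*c)))
      + 4 * Z * (\<alpha> powr (2*c) * \<gamma> / 2) * ((1 - c) * ln \<alpha> * \<alpha> powr p / k1))
    < \<alpha> powr (2*c) * \<gamma> / 2 * (2 * (2*c+p+2) / \<gamma> * ln \<alpha> / \<alpha> powr (2*c))) at_top"
  using assms by real_asymp

lemma asy_C5:
  assumes "0 < Z" "0 < \<gamma>" "0 < c" "0 < p" "0 < k2" "0 < Cs" "0 < N"
  shows "eventually (\<lambda>\<alpha>::real. sqrt (ln \<alpha>) / \<alpha> powr (2*c) \<le>
     ln (1 + (4 * exp 2 * \<alpha> powr (2*c) * Z * Cs) * (4 * \<gamma> / N) * (\<alpha> powr p / k2))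
       / (4 * exp 2 * \<alpha> powr (2*c) * Z * Cs)) at_top"
  using assms by real_asymp

context dyn begin

lemma main_explicit:
  fixes a1 a2 mmax T :: real
  defines "b \<equiv> al^2 * exp (-2*lam*T)" and "C \<equiv> real CARD('d) * Zc / \<gamma>"
  defines "\<delta> \<equiv> 2*C*a1/a2 + (C*mmax)^2/4 + real n * exp (-1) / (2*\<gamma>*b) * (ln mmax - ln a1) / a2"
  assumes "0 < T" "1/lam \<le> T" "0 < Zc" "0 < a1" "a1 \<le> a2" "a2 < mmax"
    "C * mmax \<le> 1" "Z * (C * mmax)^2 \<le> \<gamma>/4"
    "Z * sqrt (2 * \<delta>) \<le> \<gamma>/2"
    "ln (exp (b*\<gamma>/2*a2) + 4*Z*(b*\<gamma>/2)*T) < b*\<gamma>/2*mmax"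
    "a2 \<le> ln (1 + (4*exp 2*b*Z*C)*(4*\<gamma>/real n)/lam)/(4*exp 2*b*Z*C)"
  shows "norm (inverse (norm (sh (s T))) *\<^sub>R sh (s T) - ws) \<le> 2*(C*mmax)^2 + sqrt (2 * \<delta>)"
  using main_bound[of T a1 a2 mmax "C*mmax" \<delta>] assms
  unfolding bt_def[symmetric] Cs_def[symmetric] c0_def[symmetric] b_def C_def \<delta>_def
  by (simp add: c0_def)

end


lemma normalize_scale:
  fixes v :: "'a::real_normed_vector"
  assumes "0 < r"
  shows "inverse (norm (r *\<^sub>R v)) *\<^sub>R (r *\<^sub>R v) = inverse (norm v) *\<^sub>R v"
  using assms by (cases "v = 0") (auto simp: field_simps)

lemma bT_eq:
  fixes \<alpha> l c :: real
  assumes "0 < \<alpha>" "0 < l"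
  shows "\<alpha>^2 * exp (-2 * l * ((1 - c) / l * ln \<alpha>)) = \<alpha> powr (2*c)"
proof -
  have "-2 * l * ((1 - c) / l * ln \<alpha>) = (-2 * (1 - c)) * ln \<alpha>" using assms by (simp add: field_simps)
  then have "exp (-2 * l * ((1 - c) / l * ln \<alpha>)) = \<alpha> powr (-2 * (1 - c))"
    using assms by (simp add: powr_def)
  moreover have "\<alpha>^2 = \<alpha> powr 2" using assms by (simp add: powr_realpow)
  ultimately have "\<alpha>^2 * exp (-2 * l * ((1 - c) / l * ln \<alpha>)) = \<alpha> powr 2 * \<alpha> powr (-2 * (1 - c))"
    by simp
  also have "\<dots> = \<alpha> powr (2 + (-2 * (1 - c)))" by (simp only: powr_add)
  also have "2 + (-2 * (1 - c)) = 2 * c" by simp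
  finally show ?thesis .
qed


theorem corollary3p1:
  fixes x :: "nat \<Rightarrow> real^'d" and y :: "nat \<Rightarrow> real" and n :: nat
    and lam :: "real \<Rightarrow> real" and p c :: real
    and \<theta> :: "real \<Rightarrow> real \<Rightarrow> (real^'d) \<times> (real^'d)"
    and wstar :: "real^'d"
  assumes n_pos: "n > 0"
    and labels: "\<forall>i<n. y i = 1 \<or> y i = -1"
    and separable: "\<exists>w. \<forall>i<n. y i * (w \<bullet> x i) > 0"
    and p_pos: "p > 0"
    and lam_pos: "\<forall>\<alpha>>0. lam \<alpha> > 0"
    and lam_rate: "lam \<in> \<Theta>[at_top](\<lambda>\<alpha>. \<alpha> powr (- p))"
    and c_range: "0 < c" "c < 1"
    and flow: "\<forall>\<alpha>>0. is_gradient_flow (reg_loss (lam \<alpha>) n x y)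
                 ((\<chi> k. \<alpha>), (\<chi> k. \<alpha>)) (\<theta> \<alpha>)"
    and wstar: "is_max_L2_margin_dir n x y wstar"
  shows "((\<lambda>\<alpha>. let w = eff_weight (\<theta> \<alpha> ((1 - c) / lam \<alpha> * ln \<alpha>))
                in inverse (norm w) *\<^sub>R w) \<longlongrightarrow> wstar) at_top"
proof -
  define zz where "zz = (\<lambda>i. y i *\<^sub>R x i)"
  have marg_eq: "margin n x y w = Min ((\<lambda>i. w \<bullet> zz i) ` {..<n})" for w
    unfolding margin_def zz_def by simp
  define \<gamma> where "\<gamma> = margin n x y wstar"
  have ws_norm: "norm wstar = 1" and ws_opt: "\<And>w'. norm w' = 1 \<Longrightarrow> margin n x y w' \<le> \<gamma>"
    using wstar unfolding is_max_L2_margin_dir_def \<gamma>_def by auto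
  have fin: "finite ((\<lambda>i. w \<bullet> zz i) ` {..<n})" "((\<lambda>i. w \<bullet> zz i) ` {..<n}) \<noteq> {}" for w
    using n_pos by auto
  have ws_marg: "\<gamma> \<le> wstar \<bullet> zz i" if "i < n" for i
    unfolding \<gamma>_def marg_eq using fin that by (intro Min_le) auto
  have minattain: "\<exists>j<n. Min ((\<lambda>i. w \<bullet> zz i) ` {..<n}) = w \<bullet> zz j" for w
    using Min_in[OF fin(1,2)] by auto
  have gam_pos: "\<gamma> > 0"
  proof -
    obtain w0 where w0: "\<forall>i<n. y i * (w0 \<bullet> x i) > 0" using separable by blast
    then have pos: "\<forall>i<n. w0 \<bullet> zz i > 0" unfolding zz_def by simp
    have w0ne: "w0 \<noteq> 0" using pos n_pos by auto
    define u0 where "u0 = inverse (norm w0) *\<^sub>R w0"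
    have nu: "norm u0 = 1" using w0ne by (simp add: u0_def)
    obtain j where j: "j < n" "margin n x y u0 = u0 \<bullet> zz j" using minattain[of u0] marg_eq by auto
    then have "margin n x y u0 > 0" using pos w0ne by (simp add: u0_def)
    then show ?thesis using ws_opt[OF nu] by simp
  qed
  have marg_opt: "Min ((\<lambda>i. w \<bullet> zz i) ` {..<n}) \<le> \<gamma> * norm w" for w
  proof (cases "w = 0")
    case True then show ?thesis using minattain[of w] by auto
  next
    case False
    define u where "u = inverse (norm w) *\<^sub>R w"
    have nu: "norm u = 1" using False by (simp add: u_def)
    obtain j where j: "j < n" "Min ((\<lambda>i. u \<bullet> zz i) ` {..<n}) = u \<bullet> zz j" using minattain by blast
    have "Min ((\<lambda>i. w \<bullet> zz i) ` {..<n}) \<le> w \<bullet> zz j" using fin j by (intro Min_le) auto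
    also have "w \<bullet> zz j = norm w * (u \<bullet> zz j)" using False by (simp add: u_def)
    also have "\<dots> \<le> norm w * \<gamma>"
      using ws_opt[OF nu] j marg_eq[of u] by (intro mult_left_mono) auto
    finally show ?thesis by (simp add: mult.commute)
  qed
  define Z where "Z = (\<Sum>i<n. norm (zz i)) + 1"
  have Z_bound: "norm (zz i) \<le> Z" if "i < n" for i
  proof -
    have "norm (zz i) \<le> (\<Sum>i<n. norm (zz i))" using that by (intro member_le_sum) auto
    then show ?thesis unfolding Z_def by simp
  qed
  have Zc_bound: "\<bar>zz i $ k\<bar> \<le> Z" if "i < n" for i k
    using component_le_norm_cart[of "zz i" k] Z_bound[OF that] by simp
  have Z_pos: "0 < Z" unfolding Z_def by (simp add: add_nonneg_pos sum_nonneg)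
  define C where "C = real CARD('d) * Z / \<gamma>"
  have C_pos: "0 < C" unfolding C_def using Z_pos gam_pos by simp
  define K where "K = 2 * (2*c+p+2) / \<gamma>"
  have K_pos: "0 < K" unfolding K_def using gam_pos c_range p_pos by simp
  obtain k2 where k2: "k2 > 0" "eventually (\<lambda>\<alpha>. norm (lam \<alpha>) \<le> k2 * norm (\<alpha> powr (-p))) at_top"
    using landau_o.bigE[OF bigthetaD1[OF lam_rate]] by blast
  obtain k1 where k1: "k1 > 0" "eventually (\<lambda>\<alpha>. norm (lam \<alpha>) \<ge> k1 * norm (\<alpha> powr (-p))) at_top"
    using landau_omega.bigE[OF bigthetaD2[OF lam_rate]] by blast
  define s\<alpha> where "s\<alpha> \<alpha> = (\<lambda>t. \<chi> k. ln (fst (\<theta> \<alpha> t) $ k) - ln (snd (\<theta> \<alpha> t) $ k))" for \<alpha>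
  define T where "T \<alpha> = (1 - c) / lam \<alpha> * ln \<alpha>" for \<alpha>
  define b where "b \<alpha> = \<alpha> powr (2*c)" for \<alpha> :: real
  define a1 where "a1 \<alpha> = 1 / (b \<alpha> * sqrt (ln \<alpha>))" for \<alpha>
  define a2 where "a2 \<alpha> = sqrt (ln \<alpha>) / b \<alpha>" for \<alpha>
  define mm where "mm \<alpha> = K * ln \<alpha> / b \<alpha>" for \<alpha>
  define \<delta> where "\<delta> \<alpha> = 2*C*a1 \<alpha>/a2 \<alpha> + (C*mm \<alpha>)^2/4
      + real n * exp (-1) / (2*\<gamma>*b \<alpha>) * (ln (mm \<alpha>) - ln (a1 \<alpha>)) / a2 \<alpha>" for \<alpha>
  define g where "g \<alpha> = 2*(C*mm \<alpha>)^2 + sqrt (2 * \<delta> \<alpha>)" for \<alpha>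
  define what where "what \<alpha> = (let w = eff_weight (\<theta> \<alpha> (T \<alpha>)) in inverse (norm w) *\<^sub>R w)" for \<alpha>
  have fd: "s\<alpha> \<alpha> 0 = 0" "continuous_on {0..} (s\<alpha> \<alpha>)"
    "\<And>t k. t > 0 \<Longrightarrow> ((\<lambda>t. s\<alpha> \<alpha> t $ k) has_real_derivative
         4 / real n * (\<Sum>i<n. exp (- (2 * (\<alpha>^2 * exp (-2*lam \<alpha>*t)) * (sh (s\<alpha> \<alpha> t) \<bullet> zz i))) * zz i $ k)) (at t)"
    "\<And>t. 0 \<le> t \<Longrightarrow> eff_weight (\<theta> \<alpha> t) = (2 * (\<alpha>^2 * exp (-2*lam \<alpha>*t))) *\<^sub>R sh (s\<alpha> \<alpha> t)"
    if a0: "\<alpha> > 0" for \<alpha>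
    using flow_dyn[OF n_pos lam_pos[rule_format, OF a0] a0 flow[rule_format, OF a0]]
    unfolding s\<alpha>_def zz_def by auto
  have dyn: "dyn n zz wstar \<gamma> Z Z (lam \<alpha>) \<alpha> (s\<alpha> \<alpha>)" if a0: "\<alpha> > 0" for \<alpha>
    using n_pos ws_norm gam_pos ws_marg marg_opt Z_bound Zc_bound lam_pos a0 fd[OF a0]
    by unfold_locales auto
  have rho_lim: "((\<lambda>\<alpha>. C * mm \<alpha>) \<longlongrightarrow> 0) at_top"
  proof -
    have "((\<lambda>\<alpha>::real. (C * K) * ln \<alpha> / \<alpha> powr (2*c)) \<longlongrightarrow> 0) at_top"
      by (rule asy_rho) (use C_pos K_pos c_range in auto)
    moreover have "(\<lambda>\<alpha>. C * mm \<alpha>) = (\<lambda>\<alpha>::real. (C * K) * ln \<alpha> / \<alpha> powr (2*c))"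
      unfolding mm_def b_def by (simp add: mult.assoc)
    ultimately show ?thesis by simp
  qed
  have d_lim: "(\<delta> \<longlongrightarrow> 0) at_top"
  proof -
    have "0 < real n * exp (-1)" using n_pos by simp
    from asy_delta[OF C_pos K_pos this gam_pos c_range(1)] show ?thesis
      unfolding \<delta>_def a1_def a2_def mm_def b_def by simp
  qed
  have g_lim: "(g \<longlongrightarrow> 0) at_top"
  proof -
    have "((\<lambda>\<alpha>. 2*(C*mm \<alpha>)^2 + sqrt (2 * \<delta> \<alpha>)) \<longlongrightarrow> 2*0^2 + sqrt (2*0)) at_top"
      by (intro tendsto_intros rho_lim d_lim)
    then show ?thesis unfolding g_def by simp
  qed
  have er1: "eventually (\<lambda>\<alpha>. C * mm \<alpha> \<le> 1) at_top"
    using order_tendstoD(2)[OF rho_lim, of 1] by (auto elim: eventually_mono)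
  have er2: "eventually (\<lambda>\<alpha>. Z * (C * mm \<alpha>)^2 \<le> \<gamma>/4) at_top"
  proof -
    have "((\<lambda>\<alpha>. Z * (C * mm \<alpha>)^2) \<longlongrightarrow> Z * 0^2) at_top" by (intro tendsto_intros rho_lim)
    then have "eventually (\<lambda>\<alpha>. Z * (C * mm \<alpha>)^2 < \<gamma>/4) at_top"
      by (rule order_tendstoD(2)[where a = "\<gamma>/4", unfolded power_zero_numeral mult_zero_right]) (use gam_pos in simp)
    then show ?thesis by (auto elim: eventually_mono)
  qed
  have ed: "eventually (\<lambda>\<alpha>. Z * sqrt (2 * \<delta> \<alpha>) \<le> \<gamma>/2) at_top"
  proof -
    have "((\<lambda>\<alpha>. Z * sqrt (2 * \<delta> \<alpha>)) \<longlongrightarrow> Z * sqrt (2 * 0)) at_top" by (intro tendsto_intros d_lim)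
    then have "eventually (\<lambda>\<alpha>. Z * sqrt (2 * \<delta> \<alpha>) < \<gamma>/2) at_top"
      by (rule order_tendstoD(2)[where a = "\<gamma>/2", unfolded mult_zero_right real_sqrt_zero]) (use gam_pos in simp)
    then show ?thesis by (auto elim: eventually_mono)
  qed
  note eC4 = asy_C4[OF Z_pos gam_pos c_range p_pos k1(1)]
  have nr: "0 < real n" using n_pos by simp
  note eC5 = asy_C5[OF Z_pos gam_pos c_range(1) p_pos k2(1) C_pos nr]
  have ev: "eventually (\<lambda>\<alpha>. norm (what \<alpha> - wstar) \<le> g \<alpha>) at_top"
    using eventually_gt_at_top[of 1] asy_T[OF c_range] asy_a1 asy_a2[OF K_pos] er1 er2 ed eC4 eC5 k1(2) k2(2)
  proof eventually_elim
    case (elim \<alpha>)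
    have a0: "0 < \<alpha>" using elim(1) by simp
    have l0: "0 < ln \<alpha>" using elim(1) by simp
    have lp: "0 < lam \<alpha>" using lam_pos a0 by simp
    have pp: "0 < \<alpha> powr p" using a0 by simp
    have pm: "\<alpha> powr (-p) = 1 / \<alpha> powr p" using a0 by (simp add: powr_minus_divide)
    have k1l: "k1 / \<alpha> powr p \<le> lam \<alpha>" using elim(10) lp pp pm by simp
    have k2l: "lam \<alpha> \<le> k2 / \<alpha> powr p" using elim(11) lp pp pm by simp
    have inv1: "1 / lam \<alpha> \<le> \<alpha> powr p / k1"
      using k1l lp pp k1(1) by (simp add: field_simps)
    have inv2: "\<alpha> powr p / k2 \<le> 1 / lam \<alpha>"
      using k2l lp pp k2(1) by (simp add: field_simps)
    have bpos: "0 < b \<alpha>" unfolding b_def using a0 by simp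
    have bT: "\<alpha>^2 * exp (-2 * lam \<alpha> * T \<alpha>) = b \<alpha>" unfolding T_def b_def by (rule bT_eq[OF a0 lp])
    have Tpos: "0 < T \<alpha>" unfolding T_def using c_range lp l0 by simp
    have T_eq: "T \<alpha> = ((1 - c) * ln \<alpha>) * (1 / lam \<alpha>)" unfolding T_def by simp
    have T_le: "1 / lam \<alpha> \<le> T \<alpha>"
      unfolding T_eq using elim(2) lp by (simp add: divide_right_mono)
    have T_up: "T \<alpha> \<le> (1 - c) * ln \<alpha> * \<alpha> powr p / k1"
    proof -
      have "T \<alpha> \<le> ((1 - c) * ln \<alpha>) * (\<alpha> powr p / k1)"
        unfolding T_eq using inv1 c_range l0 by (intro mult_left_mono) auto
      then show ?thesis by simp
    qed
    have c_a1: "0 < a1 \<alpha>" unfolding a1_def using bpos l0 by simp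
    have c_a12: "a1 \<alpha> \<le> a2 \<alpha>"
    proof -
      have "(1 / sqrt (ln \<alpha>)) / b \<alpha> \<le> sqrt (ln \<alpha>) / b \<alpha>"
        using elim(3) bpos by (intro divide_right_mono) auto
      then show ?thesis unfolding a1_def a2_def by (simp add: mult.commute)
    qed
    have c_a2m: "a2 \<alpha> < mm \<alpha>"
      unfolding a2_def mm_def using elim(4) bpos by (rule divide_strict_right_mono)
    have c4: "ln (exp (b \<alpha> * \<gamma> / 2 * a2 \<alpha>) + 4 * Z * (b \<alpha> * \<gamma> / 2) * T \<alpha>) < b \<alpha> * \<gamma> / 2 * mm \<alpha>"
    proof -
      define X1 where "X1 = 4 * Z * (b \<alpha> * \<gamma> / 2) * T \<alpha>"
      define X2 where "X2 = 4 * Z * (b \<alpha> * \<gamma> / 2) * ((1 - c) * ln \<alpha> * \<alpha> powr p / k1)"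
      have x12: "X1 \<le> X2" unfolding X1_def X2_def
        using T_up Z_pos bpos gam_pos by (intro mult_left_mono) auto
      have x1: "0 \<le> X1" unfolding X1_def using Z_pos bpos gam_pos Tpos by simp
      have "ln (exp (b \<alpha> * \<gamma> / 2 * a2 \<alpha>) + X1) \<le> ln (exp (b \<alpha> * \<gamma> / 2 * a2 \<alpha>) + X2)"
        using x12 x1 by (subst ln_le_cancel_iff) (auto intro: add_pos_nonneg)
      then have "ln (exp (b \<alpha> * \<gamma> / 2 * a2 \<alpha>) + 4 * Z * (b \<alpha> * \<gamma> / 2) * T \<alpha>)
          \<le> ln (exp (b \<alpha> * \<gamma> / 2 * a2 \<alpha>) + 4 * Z * (b \<alpha> * \<gamma> / 2) * ((1 - c) * ln \<alpha> * \<alpha> powr p / k1))"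
        unfolding X1_def X2_def .
      also have "\<dots> < b \<alpha> * \<gamma> / 2 * mm \<alpha>"
        using elim(8) unfolding b_def a2_def mm_def K_def by simp
      finally show ?thesis .
    qed
    have c5: "a2 \<alpha> \<le> ln (1 + (4 * exp 2 * b \<alpha> * Z * C) * (4 * \<gamma> / real n) / lam \<alpha>) / (4 * exp 2 * b \<alpha> * Z * C)"
    proof -
      define X where "X = 4 * exp 2 * b \<alpha> * Z * C"
      have Xpos: "0 < X" unfolding X_def using bpos Z_pos C_pos by simp
      have "X * (4 * \<gamma> / real n) * (\<alpha> powr p / k2) \<le> X * (4 * \<gamma> / real n) * (1 / lam \<alpha>)"
        using inv2 Xpos gam_pos nr by (intro mult_left_mono) auto
      moreover have "0 \<le> X * (4 * \<gamma> / real n) * (\<alpha> powr p / k2)" using Xpos gam_pos nr pp k2(1) by simp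
      ultimately have "ln (1 + X * (4 * \<gamma> / real n) * (\<alpha> powr p / k2)) \<le> ln (1 + X * (4 * \<gamma> / real n) / lam \<alpha>)"
        by (subst ln_le_cancel_iff) auto
      then have "ln (1 + X * (4 * \<gamma> / real n) * (\<alpha> powr p / k2)) / X \<le> ln (1 + X * (4 * \<gamma> / real n) / lam \<alpha>) / X"
        using Xpos by (intro divide_right_mono) auto
      moreover have "a2 \<alpha> \<le> ln (1 + X * (4 * \<gamma> / real n) * (\<alpha> powr p / k2)) / X"
        using elim(9) unfolding a2_def X_def b_def by simp
      ultimately show ?thesis unfolding X_def by simp
    qed
    note me = dyn.main_explicit[OF dyn[OF a0], where T = "T \<alpha>" and ?a1.0 = "a1 \<alpha>" and ?a2.0 = "a2 \<alpha>" and mmax = "mm \<alpha>",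
        unfolded bT C_def[symmetric] \<delta>_def[symmetric]]
    have main: "norm (inverse (norm (sh (s\<alpha> \<alpha> (T \<alpha>)))) *\<^sub>R sh (s\<alpha> \<alpha> (T \<alpha>)) - wstar) \<le> g \<alpha>"
      unfolding g_def
      by (rule me) (use Tpos T_le Z_pos c_a1 c_a12 c_a2m elim(5) elim(6) elim(7) c4 c5 in auto)
    have "what \<alpha> = inverse (norm (sh (s\<alpha> \<alpha> (T \<alpha>)))) *\<^sub>R sh (s\<alpha> \<alpha> (T \<alpha>))"
      unfolding what_def Let_def fd(4)[OF a0 less_imp_le[OF Tpos]]
      by (rule normalize_scale) (use a0 in simp)
    then show ?case using main by simp
  qed
  have "((\<lambda>\<alpha>. what \<alpha> - wstar) \<longlongrightarrow> 0) at_top"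
    by (rule Lim_null_comparison[OF ev g_lim])
  then have "(what \<longlongrightarrow> wstar) at_top" by (rule LIM_zero_cancel)
  then show ?thesis unfolding what_def T_def .
qed

end
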